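(* Let $\overline{L}$, $D$, $K$, $\alpha(i)$ and $\beta(i)$ be as in the context. There exist $i_1$ and a constant $c_4>0$ such that for all $i\ge i_1$ and all $\mathbf{y}\in\mathbb{R}^{NM}$, $$\mathbf{y}^T\Big(\beta(i)\,\overline{L}\otimes I_M+\alpha(i)(I_N\otimes K)D\Big)\mathbf{y}\ \ge\ c_4\,\alpha(i)\,\|\mathbf{y}\|^2.$$
   Context: Objects: - $\overline{L}$ is the $N\times N$ mean of an i.i.d. sequence of random graph Laplacians on $N$ vertices, with $\lambda_2(\overline{L})>0$. - $\overline{H}_n\in\mathbb{R}^{M_n\times M}$ for $n=1,\dots,N$, with $G=\sum_n\overline{H}_n^T\overline{H}_n$ invertible. - $D=\mathrm{blockdiag}(\overline{H}_1^T\overline{H}_1,\dots,\overline{H}_N^T\overline{H}_N)$. - $K\in\mathbb{R}^{M\times M}$ is symmetric positive definite and commutes with $G$. Weight sequences: $\alpha(i)=a/(i+1)^{\tau_1}$ and $\beta(i)=b/(i+1)^{\tau_2}$, with $a,b>0$, $0<\tau_2\le\tau_1\le1$, and $\tau_1>\max(\tfrac12+\gamma_0,\tau_2+\gamma_0+\tfrac1{2+\varepsilon_1})$ for some $0\le\gamma_0<\tfrac12$ and $\varepsilon_1>0$. In particular $\tau_2<\tau_1$. *)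

theory Defs
  imports "Jordan_Normal_Form.Matrix" "Jordan_Normal_Form.Char_Poly"
    "HOL-Computational_Algebra.Polynomial" "HOL-Library.Multiset"
begin

(* Kronecker product A \<otimes> B (row/column index i corresponds to the pair (i div p, i mod p)) *)
definition kron :: "real mat \<Rightarrow> real mat \<Rightarrow> real mat" where
  "kron A B = mat (dim_row A * dim_row B) (dim_col A * dim_col B)
     (\<lambda>(i,j). A $$ (i div dim_row B, j div dim_col B) * B $$ (i mod dim_row B, j mod dim_col B))"

definition symmetric_mat :: "real mat \<Rightarrow> bool" where
  "symmetric_mat A \<longleftrightarrow> transpose_mat A = A"

definition pos_def_mat :: "nat \<Rightarrow> real mat \<Rightarrow> bool" where
  "pos_def_mat n A \<longleftrightarrow> A \<in> carrier_mat n n \<and> symmetric_mat A \<and>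
     (\<forall>x \<in> carrier_vec n. x \<noteq> 0\<^sub>v n \<longrightarrow> x \<bullet> (A *\<^sub>v x) > 0)"

definition graph_laplacian :: "nat \<Rightarrow> real mat \<Rightarrow> bool" where
  "graph_laplacian N L \<longleftrightarrow> L \<in> carrier_mat N N \<and> symmetric_mat L \<and>
     (\<forall>i<N. \<forall>j<N. i \<noteq> j \<longrightarrow> L $$ (i,j) \<le> 0) \<and>
     (\<forall>i<N. (\<Sum>j<N. L $$ (i,j)) = 0)"

definition gram_sum :: "nat \<Rightarrow> nat \<Rightarrow> (nat \<Rightarrow> real mat) \<Rightarrow> real mat" where
  "gram_sum N M H = foldr (\<lambda>n S. transpose_mat (H n) * H n + S) [0..<N] (0\<^sub>m M M)"

(* eigenvalues (with algebraic multiplicity) in increasing order;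
   for a symmetric real matrix all eigenvalues are real *)
definition eigvals_sorted :: "real mat \<Rightarrow> real list" where
  "eigvals_sorted A = sorted_list_of_multiset (proots (char_poly A))"

definition lambda2 :: "real mat \<Rightarrow> real" where
  "lambda2 A = eigvals_sorted A ! 1"

end

theory Submission
  imports Defs
begin
lemma discr:
  fixes a b c :: real
  assumes "\<And>l. a + 2*l*b + l^2*c \<ge> 0"
  shows "b^2 \<le> a*c"
proof (cases "c = 0")
  case True
  have "b = 0"
  proof (rule ccontr)
    assume "b \<noteq> 0"
    have "a + 2*(-(a+1)/(2*b))*b + (-(a+1)/(2*b))^2*c \<ge> 0" by (rule assms)
    with True \<open>b\<noteq>0\<close> show False by (simp add: field_simps)
  qed
  then show ?thesis using assms[of 0] True by simp
next
  case False
  have c0: "c \<ge> 0"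
  proof (rule ccontr)
    assume "\<not> c \<ge> 0"
    hence c: "c < 0" by simp
    define l where "l = (\<bar>a\<bar> + 2*\<bar>b\<bar> + 1) / (-c) + 1"
    have l1: "l \<ge> 1" unfolding l_def using c by (simp add: field_simps)
    have "l * (-c) \<ge> \<bar>a\<bar> + 2*\<bar>b\<bar> + 1" unfolding l_def using c by (simp add: field_simps)
    hence "l*(l*(-c)) \<ge> l*(\<bar>a\<bar> + 2*\<bar>b\<bar> + 1)" using l1 by (intro mult_left_mono) auto
    hence "l^2*(-c) \<ge> l*(\<bar>a\<bar> + 2*\<bar>b\<bar> + 1)" by (simp add: power2_eq_square mult.assoc)
    moreover have "l*(\<bar>a\<bar> + 2*\<bar>b\<bar> + 1) \<ge> \<bar>a\<bar> + 2*l*\<bar>b\<bar> + 1" 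
    proof -
      have "(l-1)*(\<bar>a\<bar>+1) \<ge> 0" using l1 by simp
      thus ?thesis by (simp add: algebra_simps)
    qed
    moreover have "a + 2*l*b \<le> \<bar>a\<bar> + 2*l*\<bar>b\<bar>" using l1
      by (smt (verit) abs_ge_self mult_left_mono)
    ultimately have "a + 2*l*b + l^2*c < 0" by linarith
    with assms[of l] show False by simp
  qed
  with False have c: "c > 0" by simp
  have "a + 2*(-b/c)*b + (-b/c)^2*c \<ge> 0" by (rule assms)
  hence "a - b^2/c \<ge> 0" using c by (simp add: field_simps power2_eq_square)
  thus ?thesis using c by (simp add: field_simps)
qed


definition qf :: "nat \<Rightarrow> (nat\<Rightarrow>nat\<Rightarrow>real) \<Rightarrow> (nat\<Rightarrow>real) \<Rightarrow> real" where
  "qf n A x = (\<Sum>i<n. \<Sum>j<n. x i * A i j * x j)"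
definition bf :: "nat \<Rightarrow> (nat\<Rightarrow>nat\<Rightarrow>real) \<Rightarrow> (nat\<Rightarrow>real) \<Rightarrow> (nat\<Rightarrow>real) \<Rightarrow> real" where
  "bf n A x y = (\<Sum>i<n. \<Sum>j<n. x i * A i j * y j)"
definition nsq :: "nat \<Rightarrow> (nat\<Rightarrow>real) \<Rightarrow> real" where
  "nsq n x = (\<Sum>i<n. (x i)^2)"
definition mv :: "nat \<Rightarrow> (nat\<Rightarrow>nat\<Rightarrow>real) \<Rightarrow> (nat\<Rightarrow>real) \<Rightarrow> nat \<Rightarrow> real" where
  "mv n A x = (\<lambda>i. \<Sum>j<n. A i j * x j)"
definition symm :: "nat \<Rightarrow> (nat\<Rightarrow>nat\<Rightarrow>real) \<Rightarrow> bool" where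
  "symm n A \<longleftrightarrow> (\<forall>i<n. \<forall>j<n. A i j = A j i)"

lemma nsq_nonneg: "nsq n x \<ge> 0" unfolding nsq_def by (simp add: sum_nonneg)

lemma qf_bf: "qf n A x = bf n A x x" by (simp add: qf_def bf_def)

lemma bf_symm: assumes "symm n A" shows "bf n A x y = bf n A y x"
proof -
  have "bf n A x y = (\<Sum>j<n. \<Sum>i<n. x i * A i j * y j)"
    unfolding bf_def by (rule sum.swap)
  also have "\<dots> = bf n A y x" unfolding bf_def
    by (intro sum.cong refl) (use assms in \<open>auto simp: symm_def\<close>)
  finally show ?thesis .
qed

lemma bf_lin_left: "bf n A (\<lambda>i. x i + l * y i) z = bf n A x z + l * bf n A y z"
  unfolding bf_def by (simp add: algebra_simps sum.distrib sum_distrib_left)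
lemma bf_lin_right: "bf n A z (\<lambda>i. x i + l * y i) = bf n A z x + l * bf n A z y"
  unfolding bf_def by (simp add: algebra_simps sum.distrib sum_distrib_left)

lemma qf_comb: assumes "symm n A"
  shows "qf n A (\<lambda>i. x i + l*y i) = qf n A x + 2*l*bf n A x y + l^2 * qf n A y"
  unfolding qf_bf bf_lin_left bf_lin_right using bf_symm[OF assms, of y x]
  by (simp add: algebra_simps power2_eq_square)

lemma psd_cs: assumes "symm n A" "\<And>z. qf n A z \<ge> 0"
  shows "(bf n A x y)^2 \<le> qf n A x * qf n A y"
  by (rule discr) (use assms qf_comb[OF assms(1)] in metis)

lemma std_cs: "(\<Sum>i<n. x i * y i)^2 \<le> nsq n x * nsq n y"
proof (rule discr)
  fix l
  have "(\<Sum>i<n. (x i + l * y i)^2) \<ge> 0" by (simp add: sum_nonneg)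
  also have "(\<Sum>i<n. (x i + l * y i)^2) = nsq n x + 2*l*(\<Sum>i<n. x i * y i) + l^2*nsq n y"
    unfolding nsq_def by (simp add: power2_eq_square algebra_simps sum.distrib sum_distrib_left)
  finally show "nsq n x + 2*l*(\<Sum>i<n. x i * y i) + l^2*nsq n y \<ge> 0" .
qed

lemma bf_mv: "bf n A x y = (\<Sum>i<n. x i * mv n A y i)"
  unfolding bf_def mv_def by (simp add: sum_distrib_left mult.assoc)
lemma qf_mv: "qf n A x = (\<Sum>i<n. x i * mv n A x i)"
  unfolding qf_bf bf_mv ..

lemma psd_kernel: assumes "symm n A" "\<And>z. qf n A z \<ge> 0" "qf n A x = 0" "i < n"
  shows "mv n A x i = 0"
proof -
  define e where "e = (\<lambda>j. if j = i then 1 else (0::real))"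
  have "(\<lambda>j. e j * mv n A x j) = (\<lambda>j. if j = i then mv n A x j else 0)" by (auto simp: e_def)
  hence "bf n A e x = mv n A x i" unfolding bf_mv using assms(4) by (simp only:) (simp add: sum.delta)
  moreover have "(bf n A e x)^2 \<le> 0" using psd_cs[OF assms(1,2), of e x] assms(3) by simp
  ultimately show ?thesis by simp
qed

lemma absprod_le: fixes e u v :: real assumes "e > 0"
  shows "\<bar>u\<bar> * \<bar>v\<bar> \<le> (e * u^2 + v^2 / e) / 2"
proof -
  have "0 \<le> (e * \<bar>u\<bar> - \<bar>v\<bar>)^2 / e" using assms by simp
  also have "\<dots> = e * u^2 + v^2/e - 2 * \<bar>u\<bar> * \<bar>v\<bar>"
    using assms by (simp add: power2_eq_square field_simps)
  finally show ?thesis by simp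
qed

lemma bf_bound: assumes "\<And>i j. i < n \<Longrightarrow> j < n \<Longrightarrow> \<bar>A i j\<bar> \<le> B" "e > 0"
  shows "\<bar>bf n A x y\<bar> \<le> B * n * (e * nsq n x + nsq n y / e) / 2"
proof -
  have "\<bar>bf n A x y\<bar> \<le> (\<Sum>i<n. \<Sum>j<n. \<bar>x i * A i j * y j\<bar>)"
    unfolding bf_def by (rule order.trans[OF sum_abs sum_mono]) (rule sum_abs)
  also have "\<dots> \<le> (\<Sum>i<n. \<Sum>j<n. B * ((e * (x i)^2 + (y j)^2 / e) / 2))"
  proof (intro sum_mono)
    fix i j assume i: "i \<in> {..<n}" and j: "j \<in> {..<n}"
    have B: "\<bar>A i j\<bar> \<le> B" using assms i j by auto
    hence B0: "B \<ge> 0" by linarith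
    have "\<bar>x i * A i j * y j\<bar> = \<bar>A i j\<bar> * (\<bar>x i\<bar> * \<bar>y j\<bar>)" by (simp add: abs_mult)
    also have "\<dots> \<le> B * (\<bar>x i\<bar> * \<bar>y j\<bar>)" by (rule mult_right_mono[OF B]) simp
    also have "\<dots> \<le> B * ((e * (x i)^2 + (y j)^2 / e) / 2)"
      by (rule mult_left_mono[OF absprod_le[OF assms(2)] B0])
    finally show "\<bar>x i * A i j * y j\<bar> \<le> B * ((e * (x i)^2 + (y j)^2 / e) / 2)" .
  qed
  also have "\<dots> = B * n * (e * nsq n x + nsq n y / e) / 2"
    unfolding nsq_def
    by (simp add: sum.distrib sum_distrib_left sum_divide_distrib add_divide_distrib algebra_simps)
  finally show ?thesis .
qed

lemma qf_bound: assumes "\<And>i j. i < n \<Longrightarrow> j < n \<Longrightarrow> \<bar>A i j\<bar> \<le> B"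
  shows "\<bar>qf n A x\<bar> \<le> B * n * nsq n x"
proof -
  have "\<bar>bf n A x x\<bar> \<le> B*n*(1*nsq n x + nsq n x/1)/2" by (rule bf_bound) (use assms in auto)
  thus ?thesis unfolding qf_bf by simp
qed

lemma mv_lower: assumes "\<And>z. qf n A z \<ge> k * nsq n z" "k \<ge> 0"
  shows "nsq n (mv n A z) \<ge> k^2 * nsq n z"
proof (cases "nsq n z = 0")
  case True thus ?thesis by (simp add: nsq_nonneg)
next
  case False
  hence pos: "nsq n z > 0" using nsq_nonneg[of n z] by simp
  have "(k * nsq n z)^2 \<le> (qf n A z)^2"
    using assms(1)[of z] assms(2) pos by (intro power_mono) auto
  also have "\<dots> \<le> nsq n z * nsq n (mv n A z)" unfolding qf_mv by (rule std_cs)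
  finally have "nsq n z * (k^2 * nsq n z) \<le> nsq n z * nsq n (mv n A z)"
    by (simp add: power2_eq_square algebra_simps)
  thus ?thesis using pos by simp
qed

lemma qf_upd: "qf n A (x(n := t)) = qf n A x"
  unfolding qf_def by (intro sum.cong refl) auto

lemma nsq_upd: "nsq n (x(n := t)) = nsq n x"
  unfolding nsq_def by (intro sum.cong refl) auto

lemma pd_bound:
  "symm n A \<Longrightarrow> (\<And>x. (\<exists>i<n. x i \<noteq> 0) \<Longrightarrow> qf n A x > 0) \<Longrightarrow> \<exists>c>0. \<forall>x. qf n A x \<ge> c * nsq n x"
proof (induction n arbitrary: A)
  case 0
  show ?case by (rule exI[of _ 1]) (simp add: qf_def nsq_def)
next
  case (Suc n A)
  note sym = Suc.prems(1) and pd = Suc.prems(2)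
  define a where "a = A n n"
  define x0 where "x0 = (\<lambda>i. if i = n then 1 else (0::real))"
  have "qf (Suc n) A x0 = a" unfolding qf_def x0_def a_def
    by (simp add: if_distrib sum.delta cong: if_cong)
  moreover have "qf (Suc n) A x0 > 0" by (rule pd) (auto simp: x0_def)
  ultimately have a: "a > 0" by simp
  define b where "b i = A i n" for i
  define A' where "A' i j = A i j - b i * b j / a" for i j
  have symA': "symm n A'" using sym unfolding symm_def A'_def by auto
  define s where "s x = (\<Sum>i<n. b i * x i)" for x
  have key: "qf (Suc n) A x = qf n A' x + (s x + a * x n)^2 / a" for x
  proof -
    have symn: "A n j = b j" if "j < n" for j using sym that unfolding symm_def b_def by auto
    have "qf (Suc n) A x = qf n A x + (\<Sum>i<n. x i * A i n * x n) + (\<Sum>j<n. x n * A n j * x j) + x n * a * x n"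
      unfolding qf_def a_def by (simp add: sum.distrib)
    also have "(\<Sum>i<n. x i * A i n * x n) = x n * s x" unfolding s_def b_def
      by (simp add: sum_distrib_left algebra_simps)
    also have "(\<Sum>j<n. x n * A n j * x j) = x n * s x" unfolding s_def
      by (simp add: sum_distrib_left algebra_simps symn)
    also have "qf n A x = qf n A' x + (s x)^2 / a"
    proof -
      have "qf n A' x = qf n A x - (\<Sum>i<n. \<Sum>j<n. x i * (b i * b j / a) * x j)"
        unfolding qf_def A'_def by (simp add: algebra_simps sum_subtractf)
      also have "(\<Sum>i<n. \<Sum>j<n. x i * (b i * b j / a) * x j) = (s x)^2 / a"
        unfolding s_def power2_eq_square sum_product sum_divide_distrib
        by (intro sum.cong refl) (simp add: algebra_simps)
      finally show ?thesis by simp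
    qed
    finally show ?thesis using a by (simp add: field_simps power2_eq_square)
  qed
  have pdA': "qf n A' x > 0" if "\<exists>i<n. x i \<noteq> 0" for x
  proof -
    define x' where "x' = x(n := - s x / a)"
    have sx: "s x' = s x" unfolding s_def x'_def by (intro sum.cong refl) auto
    have "qf (Suc n) A x' > 0" by (rule pd) (use that in \<open>auto simp: x'_def\<close>)
    also have "qf (Suc n) A x' = qf n A' x" unfolding key sx using a
      by (simp add: x'_def qf_upd)
    finally show ?thesis .
  qed
  obtain c' where c': "c' > 0" "\<And>x. qf n A' x \<ge> c' * nsq n x"
    using Suc.IH[OF symA' pdA'] by blast
  define Bs where "Bs = nsq n b"
  have Bs0: "Bs \<ge> 0" unfolding Bs_def by (rule nsq_nonneg)
  define E1 where "E1 = 1 + 2*Bs/a^2"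
  define c where "c = min (c'/E1) (a/2)"
  have E1: "E1 \<ge> 1" unfolding E1_def using a Bs0 by simp
  have c0: "c > 0" unfolding c_def using E1 c' a by simp
  show ?case
  proof (intro exI[of _ c] conjI allI c0)
    fix x
    let ?t = "x n" and ?u = "s x + a * x n"
    have ss: "(s x)^2 \<le> Bs * nsq n x" unfolding s_def Bs_def by (rule std_cs)
    have tt0: "?u - s x = a * ?t" by simp
    have tt: "?t^2 = (?u - s x)^2/a^2" unfolding tt0 using a by (simp add: power_mult_distrib)
    have "(?u - s x)^2 \<le> 2 * (?u^2 + (s x)^2)"
    proof -
      have "0 \<le> (?u + s x)^2" by simp
      thus ?thesis by (simp add: power2_eq_square algebra_simps)
    qed
    hence "?t^2 \<le> 2 * (?u^2 + (s x)^2) / a^2"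
      unfolding tt by (intro divide_right_mono) auto
    also have "\<dots> \<le> 2 * (?u^2 + Bs * nsq n x) / a^2"
      using ss by (intro divide_right_mono) auto
    also have "2 * (?u^2 + Bs * nsq n x) / a^2 = 2 * ?u^2 / a^2 + 2*Bs/a^2 * nsq n x"
      by (simp add: add_divide_distrib algebra_simps)
    finally have t2: "?t^2 \<le> 2 * ?u^2 / a^2 + 2*Bs/a^2 * nsq n x" .
    have nsqS: "nsq (Suc n) x = nsq n x + ?t^2" unfolding nsq_def by simp
    have "c * nsq (Suc n) x \<le> c * (E1 * nsq n x + 2 * ?u^2 / a^2)"
      unfolding nsqS E1_def using t2 c0 by (intro mult_left_mono) (auto simp: algebra_simps)
    also have "\<dots> = (c * E1) * nsq n x + (c * 2 / a^2) * ?u^2" by (simp add: algebra_simps)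
    also have "\<dots> \<le> c' * nsq n x + (1/a) * ?u^2"
    proof (intro add_mono mult_right_mono)
      show "c * E1 \<le> c'" unfolding c_def using E1 by (simp add: min_def field_simps)
      show "c * 2 / a^2 \<le> 1/a" unfolding c_def using a
        by (auto simp: min_def field_simps power2_eq_square)
    qed (auto simp: nsq_nonneg)
    also have "\<dots> \<le> qf n A' x + ?u^2/a" using c'(2)[of x] by simp
    also have "\<dots> = qf (Suc n) A x" using key by simp
    finally show "c * nsq (Suc n) x \<le> qf (Suc n) A x" .
  qed
qed

definition mm :: "nat \<Rightarrow> (nat\<Rightarrow>nat\<Rightarrow>real) \<Rightarrow> (nat\<Rightarrow>nat\<Rightarrow>real) \<Rightarrow> nat \<Rightarrow> nat \<Rightarrow> real" where
  "mm n A B = (\<lambda>i j. \<Sum>l<n. A i l * B l j)"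

lemma mv_mm: "mv n (mm n A B) x = mv n A (mv n B x)"
proof
  fix i
  have "mv n (mm n A B) x i = (\<Sum>j<n. \<Sum>l<n. A i l * B l j * x j)"
    unfolding mv_def mm_def by (simp add: sum_distrib_right)
  also have "\<dots> = (\<Sum>l<n. \<Sum>j<n. A i l * B l j * x j)" by (rule sum.swap)
  also have "\<dots> = mv n A (mv n B x) i"
    unfolding mv_def by (simp add: sum_distrib_left mult.assoc)
  finally show "mv n (mm n A B) x i = mv n A (mv n B x) i" .
qed

lemma bf_mv_self: assumes "symm n S" shows "bf n S x (mv n S x) = nsq n (mv n S x)"
proof -
  have "bf n S x (mv n S x) = bf n S (mv n S x) x" by (rule bf_symm[OF assms])
  also have "\<dots> = (\<Sum>i<n. mv n S x i * mv n S x i)" by (rule bf_mv)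
  finally show ?thesis by (simp add: nsq_def power2_eq_square)
qed

lemma psd_uniform:
  assumes S: "symm n S" and psd: "\<And>z. qf n S z \<ge> 0" and C: "C > 0" "\<And>y. qf n S y \<le> C * nsq n y"
    and low: "nsq n (mv n S x) \<ge> c2 * nsq n x" and c2: "c2 \<ge> 0"
  shows "qf n S x \<ge> (c2 / C) * nsq n x"
proof -
  define y where "y = mv n S x"
  have cs: "(nsq n y)^2 \<le> qf n S x * qf n S y"
    using psd_cs[OF S psd, of x y] bf_mv_self[OF S, of x] unfolding y_def by simp
  also have "\<dots> \<le> qf n S x * (C * nsq n y)" by (rule mult_left_mono[OF C(2) psd])
  finally have cs2: "nsq n y * nsq n y \<le> nsq n y * (C * qf n S x)"
    by (simp add: power2_eq_square algebra_simps)
  show ?thesis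
  proof (cases "nsq n y = 0")
    case True
    hence "c2 * nsq n x \<le> 0" using low unfolding y_def by simp
    hence "(c2/C) * nsq n x \<le> 0" using C(1) by (simp add: mult_le_0_iff divide_le_0_iff)
    thus ?thesis using psd[of x] by linarith
  next
    case False
    hence pos: "nsq n y > 0" using nsq_nonneg[of n y] by simp
    hence "nsq n y \<le> C * qf n S x" using cs2 by simp
    hence "c2 * nsq n x \<le> C * qf n S x" using low unfolding y_def by simp
    thus ?thesis using C(1) by (simp add: field_simps mult.commute)
  qed
qed

lemma comm_pd:
  assumes symK: "symm n K" and symG: "symm n G"
    and comm: "\<And>i j. i < n \<Longrightarrow> j < n \<Longrightarrow> mm n K G i j = mm n G K i j"
    and Kpd: "k > 0" "\<And>x. qf n K x \<ge> k * nsq n x"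
    and Gpd: "g > 0" "\<And>x. qf n G x \<ge> g * nsq n x"
  shows "\<exists>\<delta>>0. \<forall>x. qf n (mm n K G) x \<ge> \<delta> * nsq n x"
proof -
  define KG where "KG = mm n K G"
  have symKG: "symm n KG" unfolding symm_def
  proof (intro allI impI)
    fix i j assume i: "i < n" and j: "j < n"
    have "KG i j = mm n G K i j" using comm[OF i j] unfolding KG_def .
    also have "\<dots> = KG j i" unfolding mm_def KG_def
      using symK symG i j unfolding symm_def by (intro sum.cong refl) (auto simp: mult.commute)
    finally show "KG i j = KG j i" .
  qed
  define S where "S t = (\<lambda>i j. (1-t) * G i j + t * KG i j)" for t
  have symS: "symm n (S t)" for t using symG symKG unfolding symm_def S_def by auto
  have qfS: "qf n (S t) x = (1-t) * qf n G x + t * qf n KG x" for t x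
  proof -
    have e: "x i * S t i j * x j = (1-t)*(x i*G i j*x j) + t*(x i*KG i j*x j)" for i j
      unfolding S_def by (simp add: algebra_simps)
    show ?thesis unfolding qf_def e by (simp only: sum.distrib sum_distrib_left)
  qed
  have mvS: "mv n (S t) x i = (1-t) * mv n G x i + t * mv n KG x i" for t x i
  proof -
    have e: "S t i j * x j = (1-t)*(G i j*x j) + t*(KG i j*x j)" for j
      unfolding S_def by (simp add: algebra_simps)
    show ?thesis unfolding mv_def e by (simp only: sum.distrib sum_distrib_left)
  qed
  define BB where "BB = (\<Sum>i<n. \<Sum>j<n. \<bar>G i j\<bar> + \<bar>KG i j\<bar>)"
  have entG: "\<bar>G i j\<bar> + \<bar>KG i j\<bar> \<le> BB" if "i < n" "j < n" for i j
  proof -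
    have "\<bar>G i j\<bar> + \<bar>KG i j\<bar> \<le> (\<Sum>j'<n. \<bar>G i j'\<bar> + \<bar>KG i j'\<bar>)"
      by (rule member_le_sum[of j "{..<n}" "\<lambda>j'. \<bar>G i j'\<bar> + \<bar>KG i j'\<bar>"]) (use that in auto)
    also have "\<dots> \<le> BB" unfolding BB_def
      by (rule member_le_sum[of i "{..<n}" "\<lambda>i. \<Sum>j'<n. \<bar>G i j'\<bar> + \<bar>KG i j'\<bar>"])
         (use that in \<open>auto intro: sum_nonneg\<close>)
    finally show ?thesis .
  qed
  define C where "C = BB * n + 1"
  have BB0: "BB \<ge> 0" unfolding BB_def by (intro sum_nonneg) auto
  have C0: "C > 0" unfolding C_def using BB0 by (intro add_nonneg_pos mult_nonneg_nonneg) auto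
  have qfG_bd: "\<bar>qf n G x\<bar> \<le> BB * n * nsq n x" for x
    by (rule qf_bound) (use entG in force)
  have qfKG_bd: "\<bar>qf n KG x\<bar> \<le> BB * n * nsq n x" for x
    by (rule qf_bound) (use entG in force)
  have Sup: "qf n (S t) y \<le> C * nsq n y" if "0 \<le> t" "t \<le> 1" for t y
  proof -
    have "qf n (S t) y \<le> (1-t) * (BB * n * nsq n y) + t * (BB * n * nsq n y)"
      unfolding qfS using that qfG_bd[of y] qfKG_bd[of y]
      by (intro add_mono mult_left_mono) auto
    also have "\<dots> = BB * n * nsq n y" by (simp add: algebra_simps)
    also have "\<dots> \<le> C * nsq n y" unfolding C_def using nsq_nonneg[of n y] by (simp add: algebra_simps)
    finally show ?thesis .
  qed
  define k0 where "k0 = min 1 k"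
  have k0: "k0 > 0" "k0 \<le> 1" "k0 \<le> k" unfolding k0_def using Kpd(1) by auto
  define c2 where "c2 = k0^2 * g^2"
  have c20: "c2 > 0" unfolding c2_def using k0 Gpd(1) by simp
  have Slow: "nsq n (mv n (S t) x) \<ge> c2 * nsq n x" if t: "0 \<le> t" "t \<le> 1" for t x
  proof -
    define z where "z = mv n G x"
    have z: "nsq n z \<ge> g^2 * nsq n x" unfolding z_def by (rule mv_lower[OF Gpd(2)]) (use Gpd(1) in simp)
    define Kt where "Kt = (\<lambda>i j. (1-t) * (if i = j then 1 else 0) + t * K i j)"
    have mvKt: "mv n Kt w i = (1-t) * w i + t * mv n K w i" if "i < n" for i w
    proof -
      have e: "Kt i j * w j = (1-t) * (if i = j then w j else 0) + t*(K i j * w j)" for j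
        unfolding Kt_def by (auto simp: algebra_simps)
      have "mv n Kt w i = (1-t) * (\<Sum>j<n. if i = j then w j else 0) + t * mv n K w i"
        unfolding mv_def e by (simp only: sum.distrib sum_distrib_left)
      also have "(\<Sum>j<n. if i = j then w j else 0) = w i" using that by (simp add: sum.delta)
      finally show ?thesis .
    qed
    have qfKt: "qf n Kt w \<ge> k0 * nsq n w" for w
    proof -
      have "qf n Kt w = (1-t) * nsq n w + t * qf n K w"
      proof -
        have "qf n Kt w = (\<Sum>i<n. (1-t) * (w i)^2 + t * (w i * mv n K w i))"
          unfolding qf_mv by (intro sum.cong refl) (simp add: mvKt algebra_simps power2_eq_square)
        also have "\<dots> = (1-t) * nsq n w + t * qf n K w"
          unfolding nsq_def qf_mv by (simp only: sum.distrib sum_distrib_left)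
        finally show ?thesis .
      qed
      also have "\<dots> \<ge> (1-t) * (k0 * nsq n w) + t * (k0 * nsq n w)"
      proof (intro add_mono mult_left_mono)
        show "k0 * nsq n w \<le> nsq n w" using k0 nsq_nonneg[of n w] by (simp add: mult_left_le_one_le)
        show "k0 * nsq n w \<le> qf n K w" using Kpd(2)[of w] k0 nsq_nonneg[of n w]
          by (meson mult_right_mono order.trans)
      qed (use t in auto)
      finally show ?thesis by (simp add: algebra_simps)
    qed
    have "nsq n (mv n Kt z) \<ge> k0^2 * nsq n z" by (rule mv_lower[OF qfKt]) (use k0 in simp)
    moreover have "nsq n (mv n Kt z) = nsq n (mv n (S t) x)"
      unfolding nsq_def by (intro sum.cong refl) (simp add: mvKt mvS KG_def mv_mm z_def[symmetric])
    moreover have "k0^2 * nsq n z \<ge> k0^2 * (g^2 * nsq n x)" using z by (simp add: mult_left_mono)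
    ultimately show ?thesis unfolding c2_def by (simp add: algebra_simps)
  qed
  define \<delta> where "\<delta> = c2 / C"
  have \<delta>: "\<delta> > 0" unfolding \<delta>_def using c20 C0 by simp
  have unif: "qf n (S t) x \<ge> \<delta> * nsq n x" if "0 \<le> t" "t \<le> 1" "\<And>z. qf n (S t) z \<ge> 0" for t x
    unfolding \<delta>_def
    by (rule psd_uniform[OF symS that(3) C0 Sup[OF that(1,2)] Slow[OF that(1,2)]]) (use c20 in simp)
  define D where "D = 2 * BB * n + 1"
  have D0: "D > 0" unfolding D_def using BB0 by (intro add_nonneg_pos mult_nonneg_nonneg) auto
  obtain m :: nat where m: "real m > D / \<delta>" using reals_Archimedean2 by blast
  have "D / \<delta> > 0" using D0 \<delta> by simp
  hence m0: "m > 0" using m by (cases m) auto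
  have step: "\<forall>x. qf n (S (j/m)) x \<ge> 0" if "j \<le> m" for j
    using that
  proof (induction j)
    case 0
    show ?case using Gpd nsq_nonneg by (simp add: qfS) (meson mult_nonneg_nonneg order.trans less_imp_le)
  next
    case (Suc j)
    have jm: "j \<le> m" using Suc.prems by simp
    have t0: "0 \<le> real j / m" and t1: "real j / m \<le> 1" using jm m0 by auto
    show ?case
    proof
      fix x
      have base: "qf n (S (j/m)) x \<ge> \<delta> * nsq n x" using unif[OF t0 t1] Suc.IH[OF jm] by blast
      have "qf n (S (Suc j/m)) x = qf n (S (j/m)) x + (1/m) * (qf n KG x - qf n G x)"
        unfolding qfS using m0 by (simp add: field_simps)
      moreover have "\<bar>qf n KG x - qf n G x\<bar> \<le> D * nsq n x"
        using qfKG_bd[of x] qfG_bd[of x] nsq_nonneg[of n x] unfolding D_def by (simp add: algebra_simps)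
      moreover have "(1/m) * (D * nsq n x) \<le> \<delta> * nsq n x"
      proof -
        have "D / m \<le> \<delta>" using m m0 \<delta> by (simp add: field_simps)
        hence "(D / m) * nsq n x \<le> \<delta> * nsq n x" using nsq_nonneg[of n x] by (rule mult_right_mono)
        thus ?thesis by simp
      qed
      moreover have "(1/m) * (qf n KG x - qf n G x) \<ge> - ((1/m) * (D * nsq n x))"
      proof -
        have "- (D * nsq n x) \<le> qf n KG x - qf n G x" using calculation(2) by (simp add: abs_le_iff)
        hence "(1/m) * (- (D * nsq n x)) \<le> (1/m) * (qf n KG x - qf n G x)"
          by (rule mult_left_mono) simp
        thus ?thesis by simp
      qed
      ultimately show "qf n (S (Suc j/m)) x \<ge> 0" using base by linarith
    qed
  qed
  have "\<forall>x. qf n (S 1) x \<ge> 0" using step[of m] m0 by simp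
  hence "qf n (S 1) x \<ge> \<delta> * nsq n x" for x using unif[of 1] by simp
  moreover have "qf n (S 1) x = qf n KG x" for x unfolding qfS by simp
  ultimately show ?thesis using \<delta> unfolding KG_def by auto
qed

lemma lap_psd:
  assumes sym: "symm N Lf" and off: "\<And>i j. i < N \<Longrightarrow> j < N \<Longrightarrow> i \<noteq> j \<Longrightarrow> Lf i j \<le> 0"
    and rs: "\<And>i. i < N \<Longrightarrow> (\<Sum>j<N. Lf i j) = 0"
  shows "qf N Lf w \<ge> 0"
proof -
  have t1: "(\<Sum>i<N. \<Sum>j<N. Lf i j * (w i)^2) = 0"
    by (simp add: sum_distrib_right[symmetric] rs)
  have "(\<Sum>i<N. \<Sum>j<N. Lf i j * (w j)^2) = (\<Sum>j<N. \<Sum>i<N. Lf i j * (w j)^2)" by (rule sum.swap)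
  also have "\<dots> = (\<Sum>j<N. \<Sum>i<N. Lf j i * (w j)^2)"
    using sym unfolding symm_def by (intro sum.cong refl) auto
  also have "\<dots> = 0" by (simp add: sum_distrib_right[symmetric] rs)
  finally have t2: "(\<Sum>i<N. \<Sum>j<N. Lf i j * (w j)^2) = 0" .
  have "(\<Sum>i<N. \<Sum>j<N. Lf i j * (w i - w j)^2) = (\<Sum>i<N. \<Sum>j<N. Lf i j * (w i)^2) + (\<Sum>i<N. \<Sum>j<N. Lf i j * (w j)^2) - 2 * qf N Lf w"
    unfolding qf_def by (simp add: power2_eq_square algebra_simps sum.distrib sum_subtractf sum_distrib_left)
  hence eq: "qf N Lf w = - (\<Sum>i<N. \<Sum>j<N. Lf i j * (w i - w j)^2) / 2" using t1 t2 by simp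
  have "(\<Sum>i<N. \<Sum>j<N. Lf i j * (w i - w j)^2) \<le> 0"
  proof (intro sum_nonpos)
    fix i j assume "i \<in> {..<N}" "j \<in> {..<N}"
    thus "Lf i j * (w i - w j)^2 \<le> 0" using off[of i j]
      by (cases "i = j") (auto simp: mult_nonpos_nonneg)
  qed
  thus ?thesis unfolding eq by simp
qed

lemma lap_coercive:
  assumes sym: "symm N Lf" and off: "\<And>i j. i < N \<Longrightarrow> j < N \<Longrightarrow> i \<noteq> j \<Longrightarrow> Lf i j \<le> 0"
    and rs: "\<And>i. i < N \<Longrightarrow> (\<Sum>j<N. Lf i j) = 0"
    and ker: "\<And>w. (\<forall>i<N. mv N Lf w i = 0) \<Longrightarrow> (\<Sum>i<N. w i) = 0 \<Longrightarrow> (\<exists>i<N. w i \<noteq> 0) \<Longrightarrow> False"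
  shows "\<exists>c>0. \<forall>w. (\<Sum>i<N. w i) = 0 \<longrightarrow> qf N Lf w \<ge> c * nsq N w"
proof -
  define Q where "Q i j = Lf i j + 1" for i j
  have symQ: "symm N Q" using sym unfolding symm_def Q_def by auto
  have qfQ: "qf N Q x = qf N Lf x + (\<Sum>i<N. x i)^2" for x
    unfolding qf_def Q_def power2_eq_square sum_product
    by (simp add: algebra_simps sum.distrib)
  have psd: "qf N Lf z \<ge> 0" for z by (rule lap_psd[OF sym off rs])
  have pd: "qf N Q x > 0" if "\<exists>i<N. x i \<noteq> 0" for x
  proof (rule ccontr)
    assume "\<not> qf N Q x > 0"
    hence "qf N Lf x + (\<Sum>i<N. x i)^2 \<le> 0" unfolding qfQ by simp
    moreover have "(\<Sum>i<N. x i)^2 \<ge> 0" by simp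
    ultimately have z1: "qf N Lf x = 0" and z2': "(\<Sum>i<N. x i)^2 = 0" using psd[of x] by linarith+
    from z2' have z2: "(\<Sum>i<N. x i) = 0" by simp
    have "\<forall>i<N. mv N Lf x i = 0" using psd_kernel[OF sym psd z1] by blast
    with ker z2 that show False by blast
  qed
  obtain c where c: "c > 0" "\<And>x. qf N Q x \<ge> c * nsq N x" using pd_bound[OF symQ pd] by blast
  show ?thesis
  proof (intro exI[of _ c] conjI allI impI c(1))
    fix w :: "nat \<Rightarrow> real" assume "(\<Sum>i<N. w i) = 0"
    thus "qf N Lf w \<ge> c * nsq N w" using c(2)[of w] qfQ[of w] by simp
  qed
qed

lemma sorted_two_zero:
  fixes xs :: "real list"
  assumes "sorted xs" "count (mset xs) 0 \<ge> 2"
  shows "xs ! 1 \<le> 0"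
proof (cases xs)
  case Nil thus ?thesis using assms by simp
next
  case (Cons a ys)
  show ?thesis
  proof (cases ys)
    case Nil thus ?thesis using assms Cons by (auto split: if_splits)
  next
    case (Cons b zs)
    note xs = \<open>xs = a # ys\<close>[unfolded Cons]
    show ?thesis
    proof (rule ccontr)
      assume "\<not> xs ! 1 \<le> 0"
      hence b: "b > 0" using xs by simp
      have "\<forall>z\<in>set zs. b \<le> z" using assms(1) xs by simp
      hence "\<forall>z\<in>set zs. z \<noteq> 0" using b by force
      hence "0 \<notin> set zs" by blast
      hence z: "count (mset zs) 0 = 0" by simp
      have "count (mset xs) 0 \<le> 1 + count (mset zs) 0" using xs b by simp
      hence "count (mset xs) 0 \<le> 1" using z by simp
      thus False using assms(2) by simp
    qed
  qed
qed

lemma sum_insert_index: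
  fixes f :: "nat \<Rightarrow> real"
  assumes i: "i < N"
  shows "(\<Sum>b<N-1. f (insert_index i b)) = (\<Sum>c\<in>{..<N}-{i}. f c)"
proof (rule sum.reindex_bij_witness[of _ "delete_index i" "insert_index i"])
  fix c assume "c \<in> {..<N}-{i}"
  thus "insert_index i (delete_index i c) = c" by (simp add: insert_delete_index)
  show "delete_index i c \<in> {..<N-1}" using \<open>c \<in> {..<N}-{i}\<close> i
    by (auto simp: delete_index_def)
next
  fix b assume "b \<in> {..<N-1}"
  thus "delete_index i (insert_index i b) = b" by simp
  show "insert_index i b \<in> {..<N}-{i}" using \<open>b \<in> {..<N-1}\<close> i
    by (auto simp: insert_index_def)
qed simp

lemma lambda2_kernel:
  fixes L :: "real mat"
  assumes L: "L \<in> carrier_mat N N" and N2: "N \<ge> 2"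
    and rs: "\<And>i. i < N \<Longrightarrow> (\<Sum>j<N. L $$ (i,j)) = 0"
    and kw: "\<And>i. i < N \<Longrightarrow> (\<Sum>j<N. L $$ (i,j) * w j) = 0"
    and sw: "(\<Sum>i<N. w i) = 0" and nz: "\<exists>i<N. w i \<noteq> 0"
  shows "lambda2 L \<le> 0"
proof -
  let ?p = "char_poly L"
  have del: "poly (char_poly (mat_delete L i i)) 0 = 0" if i: "i < N" for i
  proof -
    define u where "u j = w j - w i" for j
    have ku: "(\<Sum>j<N. L $$ (r,j) * u j) = 0" if "r < N" for r
      unfolding u_def using kw[OF that] rs[OF that]
      by (simp add: algebra_simps sum_subtractf sum_distrib_left[symmetric])
    have "\<exists>j<N. u j \<noteq> 0"
    proof (rule ccontr)
      assume "\<not> ?thesis"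
      hence eq: "w j = w i" if "j < N" for j using that unfolding u_def by auto
      have "(\<Sum>j<N. w j) = (\<Sum>j<N. w i)" by (rule sum.cong) (auto simp: eq)
      hence "real N * w i = 0" using sw by simp
      hence "w i = 0" using N2 by simp
      thus False using nz eq by auto
    qed
    then obtain j where j: "j < N" "u j \<noteq> 0" by blast
    have ji: "j \<noteq> i" using j unfolding u_def by auto
    define v where "v = vec (N-1) (\<lambda>b. u (insert_index i b))"
    have v: "v \<in> carrier_vec (N-1)" unfolding v_def by simp
    have "v \<noteq> 0\<^sub>v (N-1)"
    proof
      assume "v = 0\<^sub>v (N-1)"
      moreover define jj where "jj = delete_index i j"
      have jj: "jj < N-1" "insert_index i jj = j" using j ji i
        unfolding jj_def by (auto simp: delete_index_def insert_delete_index)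
      ultimately have "v $ jj = 0\<^sub>v (N-1) $ jj" by simp
      hence "u j = 0" using jj unfolding v_def by simp
      thus False using j by simp
    qed
    moreover have "mat_delete L i i *\<^sub>v v = 0 \<cdot>\<^sub>v v"
    proof (rule eq_vecI)
      show "dim_vec (mat_delete L i i *\<^sub>v v) = dim_vec (0 \<cdot>\<^sub>v v)" using L v by simp
      fix a assume "a < dim_vec (0 \<cdot>\<^sub>v v)"
      hence a: "a < N - 1" using v by simp
      have ia: "insert_index i a < N" using a i by (auto simp: insert_index_def)
      have "(mat_delete L i i *\<^sub>v v) $ a = (\<Sum>b<N-1. mat_delete L i i $$ (a,b) * v $ b)"
        using L a v by (simp add: mult_mat_vec_def scalar_prod_def row_def sum.atLeast0_lessThan_Suc lessThan_atLeast0)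
      also have "\<dots> = (\<Sum>b<N-1. L $$ (insert_index i a, insert_index i b) * u (insert_index i b))"
        using L a i by (intro sum.cong refl) (auto simp: v_def mat_delete_def insert_index_def)
      also have "\<dots> = (\<Sum>c\<in>{..<N}-{i}. L $$ (insert_index i a, c) * u c)"
        by (rule sum_insert_index[OF i])
      also have "\<dots> = (\<Sum>c<N. L $$ (insert_index i a, c) * u c)"
        using i by (subst sum_diff1) (auto simp: u_def)
      also have "\<dots> = 0" by (rule ku[OF ia])
      finally show "(mat_delete L i i *\<^sub>v v) $ a = (0 \<cdot>\<^sub>v v) $ a" using a v by simp
    qed
    ultimately have "eigenvector (mat_delete L i i) v 0"
      unfolding eigenvector_def using v L by simp
    hence "eigenvalue (mat_delete L i i) 0" unfolding eigenvalue_def by blast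
    thus ?thesis using eigenvalue_root_char_poly[OF mat_delete_carrier[OF L]] by simp
  qed
  have p0: "poly ?p 0 = 0"
  proof -
    define one where "one = vec N (\<lambda>_. 1::real)"
    have "eigenvector L one 0" unfolding eigenvector_def
    proof (intro conjI)
      show "one \<in> carrier_vec (dim_row L)" using L by (simp add: one_def)
      show "one \<noteq> 0\<^sub>v (dim_row L)"
      proof
        assume "one = 0\<^sub>v (dim_row L)"
        hence "one $ 0 = 0\<^sub>v (dim_row L) $ 0" by simp
        thus False using N2 L by (simp add: one_def)
      qed
      show "L *\<^sub>v one = 0 \<cdot>\<^sub>v one"
        by (rule eq_vecI) (use L rs in \<open>auto simp: one_def mult_mat_vec_def scalar_prod_def row_def
           sum.atLeast0_lessThan_Suc lessThan_atLeast0\<close>)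
    qed
    hence "eigenvalue L 0" unfolding eigenvalue_def by blast
    thus ?thesis using eigenvalue_root_char_poly[OF L] by simp
  qed
  have degp: "degree ?p = N" "coeff ?p N = 1" using degree_monic_char_poly[OF L] by auto
  have pnz: "?p \<noteq> 0" using degp N2 by auto
  have "pderiv ?p = (\<Sum>i<N. char_poly (mat_delete L i i))" by (rule pderiv_char_poly[OF L])
  hence dp0: "poly (pderiv ?p) 0 = 0" using del by (simp add: poly_sum)
  have dpnz: "pderiv ?p \<noteq> 0" using degp N2 by (simp add: pderiv_eq_0_iff)
  have "order 0 ?p = Suc (order 0 (pderiv ?p))" by (rule order_pderiv[OF pnz p0])
  moreover have "order 0 (pderiv ?p) \<noteq> 0" using dp0 dpnz order_root by blast
  ultimately have "order 0 ?p \<ge> 2" by simp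
  hence cnt: "count (proots ?p) 0 \<ge> 2" using pnz by simp
  show ?thesis unfolding lambda2_def eigvals_sorted_def
    by (rule sorted_two_zero) (use cnt in simp_all)
qed

lemma qf_add: "qf n A (\<lambda>i. x i + y i) = qf n A x + bf n A x y + bf n A y x + qf n A y"
  using bf_lin_left[of n A x 1 y] bf_lin_right[of n A _ x 1 y] unfolding qf_bf by simp

lemma main_ineq:
  fixes N M :: nat and Lf :: "nat \<Rightarrow> nat \<Rightarrow> real" and KP :: "nat \<Rightarrow> nat \<Rightarrow> nat \<Rightarrow> real"
  assumes N: "N > 0"
    and symL: "symm N Lf" and rs: "\<And>i. i < N \<Longrightarrow> (\<Sum>j<N. Lf i j) = 0"
    and cL: "cL > 0" "\<And>w. (\<Sum>i<N. w i) = 0 \<Longrightarrow> qf N Lf w \<ge> cL * nsq N w"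
    and B: "\<And>n i j. n < N \<Longrightarrow> i < M \<Longrightarrow> j < M \<Longrightarrow> \<bar>KP n i j\<bar> \<le> B"
    and \<kappa>: "\<kappa> > 0" "\<And>v. (\<Sum>n<N. qf M (KP n) v) \<ge> \<kappa> * nsq M v"
  shows "\<exists>R c4. c4 > 0 \<and> (\<forall>\<alpha> \<beta> Y. \<alpha> > 0 \<longrightarrow> \<beta> \<ge> R * \<alpha> \<longrightarrow>
      \<beta> * (\<Sum>m<M. qf N Lf (\<lambda>n. Y n m)) + \<alpha> * (\<Sum>n<N. qf M (KP n) (Y n))
        \<ge> c4 * \<alpha> * (\<Sum>n<N. nsq M (Y n)))"
proof -
  define BM where "BM = \<bar>B\<bar> * M + 1"
  have BM: "BM > 0" unfolding BM_def by (simp add: add_nonneg_pos)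
  define e where "e = \<kappa> / (2 * N * BM)"
  have e: "e > 0" unfolding e_def using \<kappa> BM N by simp
  define C1 where "C1 = BM / e + BM"
  have C1: "C1 \<ge> 0" unfolding C1_def using BM e by simp
  define R where "R = (C1 + 1) / cL"
  define c4 where "c4 = min (\<kappa> / (2 * N)) 1"
  have c4: "c4 > 0" unfolding c4_def using \<kappa> N by simp
  have bfB: "\<bar>bf M (KP n) x y\<bar> \<le> BM * (e' * nsq M x + nsq M y / e') / 2" if "n < N" "e' > 0" for n x y e'
  proof -
    have "\<bar>bf M (KP n) x y\<bar> \<le> B * M * (e' * nsq M x + nsq M y / e') / 2"
      by (rule bf_bound) (use B that in auto)
    also have "\<dots> \<le> BM * (e' * nsq M x + nsq M y / e') / 2"
    proof -
      have "0 \<le> e' * nsq M x + nsq M y / e'" using that nsq_nonneg[of M x] nsq_nonneg[of M y] by simp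
      moreover have "B * M \<le> BM"
      proof -
        have "B * M \<le> \<bar>B\<bar> * M" by (rule mult_right_mono) auto
        thus ?thesis unfolding BM_def by simp
      qed
      ultimately show ?thesis by (intro divide_right_mono mult_right_mono) auto
    qed
    finally show ?thesis .
  qed
  have qfB: "\<bar>qf M (KP n) x\<bar> \<le> BM * nsq M x" if "n < N" for n x
    using bfB[OF that, of 1 x x] unfolding qf_bf by simp
  have main: "\<beta> * (\<Sum>m<M. qf N Lf (\<lambda>n. Y n m)) + \<alpha> * (\<Sum>n<N. qf M (KP n) (Y n))
        \<ge> c4 * \<alpha> * (\<Sum>n<N. nsq M (Y n))"
    if \<alpha>: "\<alpha> > 0" and \<beta>: "\<beta> \<ge> R * \<alpha>" for \<alpha> \<beta> :: real and Y :: "nat \<Rightarrow> nat \<Rightarrow> real"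
  proof -
    define v where "v m = (\<Sum>n<N. Y n m) / N" for m
    define W where "W n m = Y n m - v m" for n m
    have YW: "Y n = (\<lambda>m. v m + W n m)" for n unfolding W_def by auto
    have sW: "(\<Sum>n<N. W n m) = 0" for m unfolding W_def v_def using N
      by (simp add: sum_subtractf)
    define Wsq where "Wsq = (\<Sum>n<N. nsq M (W n))"
    have Wsq0: "Wsq \<ge> 0" unfolding Wsq_def by (intro sum_nonneg) (simp add: nsq_nonneg)
    have qfL: "qf N Lf (\<lambda>n. Y n m) = qf N Lf (\<lambda>n. W n m)" for m
    proof -
      have "(\<lambda>n. Y n m) = (\<lambda>n. W n m + v m * 1)" unfolding W_def by auto
      hence "qf N Lf (\<lambda>n. Y n m) = qf N Lf (\<lambda>n. W n m) + 2 * v m * bf N Lf (\<lambda>n. W n m) (\<lambda>_. 1)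
          + (v m)^2 * qf N Lf (\<lambda>_. 1)"
        using qf_comb[OF symL, of "\<lambda>n. W n m" "v m" "\<lambda>_. 1"] by simp
      moreover have "bf N Lf x (\<lambda>_. 1) = 0" for x
        unfolding bf_def by (simp add: sum_distrib_left[symmetric] rs)
      ultimately show ?thesis unfolding qf_bf by simp
    qed
    have QL: "(\<Sum>m<M. qf N Lf (\<lambda>n. Y n m)) \<ge> cL * Wsq"
    proof -
      have "cL * Wsq = (\<Sum>m<M. cL * nsq N (\<lambda>n. W n m))"
        unfolding Wsq_def nsq_def sum_distrib_left[symmetric] by (subst sum.swap) simp
      also have "\<dots> \<le> (\<Sum>m<M. qf N Lf (\<lambda>n. Y n m))"
        unfolding qfL by (intro sum_mono cL(2)) (rule sW)
      finally show ?thesis .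
    qed
    have QA: "(\<Sum>n<N. qf M (KP n) (Y n)) \<ge> \<kappa> / 2 * nsq M v - C1 * Wsq"
    proof -
      have split: "qf M (KP n) (Y n) = qf M (KP n) v + (bf M (KP n) v (W n) + bf M (KP n) (W n) v)
          + qf M (KP n) (W n)" for n
        unfolding YW qf_add by simp
      have low: "bf M (KP n) v (W n) + bf M (KP n) (W n) v + qf M (KP n) (W n)
          \<ge> - (BM * e * nsq M v + (BM / e + BM) * nsq M (W n))" if "n < N" for n
      proof -
        have 1: "\<bar>bf M (KP n) v (W n)\<bar> \<le> BM * (e * nsq M v + nsq M (W n) / e) / 2"
          by (rule bfB[OF that e])
        have 2: "\<bar>bf M (KP n) (W n) v\<bar> \<le> BM * ((1/e) * nsq M (W n) + nsq M v / (1/e)) / 2"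
          by (rule bfB[OF that]) (use e in simp)
        have 3: "\<bar>qf M (KP n) (W n)\<bar> \<le> BM * nsq M (W n)" by (rule qfB[OF that])
        have "BM * (e * nsq M v + nsq M (W n) / e) / 2 + BM * ((1/e) * nsq M (W n) + nsq M v / (1/e)) / 2
            + BM * nsq M (W n) = BM * e * nsq M v + (BM / e + BM) * nsq M (W n)"
          using e by (simp add: field_simps)
        thus ?thesis using 1 2 3 by linarith
      qed
      have "(\<Sum>n<N. qf M (KP n) (Y n)) = (\<Sum>n<N. qf M (KP n) v)
          + (\<Sum>n<N. bf M (KP n) v (W n) + bf M (KP n) (W n) v + qf M (KP n) (W n))"
        unfolding split by (simp add: sum.distrib add.assoc)
      also have "\<dots> \<ge> \<kappa> * nsq M v + (\<Sum>n<N. - (BM * e * nsq M v + (BM / e + BM) * nsq M (W n)))"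
        using \<kappa>(2)[of v] low by (intro add_mono sum_mono) auto
      also have "(\<Sum>n<N. - (BM * e * nsq M v + (BM / e + BM) * nsq M (W n)))
          = - (N * BM * e * nsq M v) - C1 * Wsq"
        unfolding Wsq_def C1_def by (simp add: sum_subtractf sum_distrib_left[symmetric])
      also have "N * BM * e = \<kappa> / 2" unfolding e_def using N BM by simp
      finally show ?thesis by simp
    qed
    have nrm: "(\<Sum>n<N. nsq M (Y n)) = N * nsq M v + Wsq"
    proof -
      have "(\<Sum>n<N. nsq M (Y n)) = (\<Sum>m<M. \<Sum>n<N. (v m)^2 + 2 * v m * W n m + (W n m)^2)"
        unfolding nsq_def YW by (subst sum.swap) (simp add: power2_eq_square algebra_simps)
      also have "\<dots> = (\<Sum>m<M. N * (v m)^2 + 2 * v m * (\<Sum>n<N. W n m) + (\<Sum>n<N. (W n m)^2))"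
        by (simp add: sum.distrib sum_distrib_left)
      also have "\<dots> = N * nsq M v + Wsq"
      proof -
        have "(\<Sum>m<M. \<Sum>n<N. (W n m)^2) = Wsq" unfolding Wsq_def nsq_def by (rule sum.swap)
        thus ?thesis unfolding sW nsq_def by (simp add: sum.distrib sum_distrib_left)
      qed
      finally show ?thesis .
    qed
    have R0: "R > 0" unfolding R_def using C1 cL by simp
    have b0: "\<beta> \<ge> 0" using \<beta> R0 \<alpha> by (smt (verit) mult_pos_pos)
    have P1: "\<alpha> * (C1 + 1) * Wsq \<le> \<beta> * (\<Sum>m<M. qf N Lf (\<lambda>n. Y n m))"
    proof -
      have "\<alpha> * (C1 + 1) = R * \<alpha> * cL" unfolding R_def using cL by simp
      also have "\<dots> \<le> \<beta> * cL" using \<beta> cL by (intro mult_right_mono) auto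
      finally have "\<alpha> * (C1 + 1) * Wsq \<le> \<beta> * cL * Wsq" using Wsq0 by (intro mult_right_mono)
      moreover have "\<beta> * cL * Wsq \<le> \<beta> * (\<Sum>m<M. qf N Lf (\<lambda>n. Y n m))"
        using b0 QL by (simp add: mult.assoc mult_left_mono)
      ultimately show ?thesis by linarith
    qed
    have P2: "\<alpha> * (\<kappa> / 2 * nsq M v - C1 * Wsq) \<le> \<alpha> * (\<Sum>n<N. qf M (KP n) (Y n))"
      using QA \<alpha> by (intro mult_left_mono) auto
    have "c4 * \<alpha> * (\<Sum>n<N. nsq M (Y n)) = \<alpha> * (c4 * N * nsq M v + c4 * Wsq)"
      unfolding nrm by (simp add: algebra_simps)
    also have "\<dots> \<le> \<alpha> * (\<kappa> / 2 * nsq M v + Wsq)"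
    proof (intro mult_left_mono add_mono)
      show "c4 * N * nsq M v \<le> \<kappa> / 2 * nsq M v"
        using nsq_nonneg[of M v] N unfolding c4_def
        by (intro mult_right_mono) (auto simp: min_def field_simps)
      have "c4 \<le> 1" unfolding c4_def by simp
      thus "c4 * Wsq \<le> Wsq" using Wsq0 c4 by (simp add: mult_left_le_one_le)
    qed (use \<alpha> in auto)
    also have "\<dots> = \<alpha> * (C1 + 1) * Wsq + \<alpha> * (\<kappa> / 2 * nsq M v - C1 * Wsq)" by (simp add: algebra_simps)
    also have "\<dots> \<le> \<beta> * (\<Sum>m<M. qf N Lf (\<lambda>n. Y n m)) + \<alpha> * (\<Sum>n<N. qf M (KP n) (Y n))"
      using P1 P2 by (rule add_mono)
    finally have fin: "c4 * \<alpha> * (\<Sum>n<N. nsq M (Y n)) \<le> \<beta> * (\<Sum>m<M. qf N Lf (\<lambda>n. Y n m)) + \<alpha> * (\<Sum>n<N. qf M (KP n) (Y n))" .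
    thus ?thesis by simp
  qed
  show ?thesis using c4 main by blast
qed

lemma sp_sum: "v \<in> carrier_vec n \<Longrightarrow> w \<in> carrier_vec n \<Longrightarrow> v \<bullet> w = (\<Sum>i<n. v$i * w$i)"
  unfolding scalar_prod_def by (simp add: lessThan_atLeast0)

lemma mult_entry: assumes "A \<in> carrier_mat a b" "B \<in> carrier_mat b c" "i < a" "j < c"
  shows "(A*B)$$(i,j) = (\<Sum>l<b. A$$(i,l) * B$$(l,j))"
  using assms by (simp add: sp_sum[of _ b])

lemma quad_vec: assumes "A \<in> carrier_mat n n" "y \<in> carrier_vec n"
  shows "y \<bullet> (A *\<^sub>v y) = (\<Sum>i<n. \<Sum>j<n. y$i * A$$(i,j) * y$j)"
proof -
  have "y \<bullet> (A *\<^sub>v y) = (\<Sum>i<n. y$i * (A *\<^sub>v y)$i)" using assms by (simp add: sp_sum[of _ n])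
  also have "\<dots> = (\<Sum>i<n. y$i * (\<Sum>j<n. A$$(i,j) * y$j))"
    using assms by (intro sum.cong refl) (simp add: sp_sum[of _ n])
  finally show ?thesis by (simp add: sum_distrib_left mult.assoc)
qed

lemma quad_vec_fun: assumes "A \<in> carrier_mat n n"
  shows "vec n x \<bullet> (A *\<^sub>v vec n x) = qf n (\<lambda>i j. A$$(i,j)) x"
  unfolding quad_vec[OF assms vec_carrier] qf_def by simp

lemma mv_vec: assumes "A \<in> carrier_mat n n" "i < n"
  shows "(A *\<^sub>v vec n x) $ i = mv n (\<lambda>i j. A$$(i,j)) x i"
  using assms unfolding mv_def by (simp add: sp_sum[of _ n])

lemma sum_split_nm: fixes N M :: nat assumes "M > 0"
  shows "(\<Sum>i<N*M. f i) = (\<Sum>n<N. \<Sum>m<M. f (n*M+m))"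
proof -
  have "(\<Sum>n<N. \<Sum>m<M. f (n*M+m)) = (\<Sum>(n,m)\<in>{..<N}\<times>{..<M}. f (n*M+m))"
    by (rule sum.cartesian_product)
  also have "\<dots> = (\<Sum>i<N*M. f i)"
  proof (rule sum.reindex_bij_witness[of _ "\<lambda>i. (i div M, i mod M)" "\<lambda>(n,m). n*M+m"])
    fix i assume "i \<in> {..<N*M}"
    thus "(case (i div M, i mod M) of (n, m) \<Rightarrow> n * M + m) = i" by simp
    show "(i div M, i mod M) \<in> {..<N}\<times>{..<M}" using \<open>i \<in> {..<N*M}\<close> assms
      by (auto simp: less_mult_imp_div_less)
  next
    fix p assume p: "p \<in> {..<N}\<times>{..<M}"
    then obtain n m where nm: "p = (n,m)" "n < N" "m < M" by auto
    show "((case p of (n, m) \<Rightarrow> n * M + m) div M, (case p of (n, m) \<Rightarrow> n * M + m) mod M) = p"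
      using nm by simp
    have "n*M+m < (n+1)*M" using nm by simp
    also have "\<dots> \<le> N*M" using nm by (intro mult_right_mono) auto
    finally show "(case p of (n, m) \<Rightarrow> n * M + m) \<in> {..<N*M}" using nm by simp
  qed auto
  finally show ?thesis by simp
qed

lemma idx_lt: fixes n N m M :: nat shows "n < N \<Longrightarrow> m < M \<Longrightarrow> n*M+m < N*M"
proof -
  assume nm: "n < N" "m < M"
  have "n*M+m < (n+1)*M" using nm by simp
  also have "\<dots> \<le> N*M" using nm by (intro mult_right_mono) auto
  finally show ?thesis .
qed

lemma diag_block_entry:
  fixes As :: "real mat list" and M :: nat
  assumes "\<And>A. A \<in> set As \<Longrightarrow> A \<in> carrier_mat M M"
  shows "diag_block_mat As \<in> carrier_mat (length As * M) (length As * M) \<and>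
    (\<forall>n n' m m'. n < length As \<longrightarrow> n' < length As \<longrightarrow> m < M \<longrightarrow> m' < M \<longrightarrow>
      diag_block_mat As $$ (n*M+m, n'*M+m') = (if n = n' then (As!n) $$ (m,m') else 0))"
  using assms
proof (induction As)
  case Nil thus ?case by simp
next
  case (Cons A As)
  have A: "A \<in> carrier_mat M M" using Cons.prems by simp
  have IH: "diag_block_mat As \<in> carrier_mat (length As * M) (length As * M)"
    "\<And>n n' m m'. n < length As \<Longrightarrow> n' < length As \<Longrightarrow> m < M \<Longrightarrow> m' < M \<Longrightarrow>
      diag_block_mat As $$ (n*M+m, n'*M+m') = (if n = n' then (As!n) $$ (m,m') else 0)"
    using Cons.IH Cons.prems by auto
  define B where "B = diag_block_mat As"
  have eq: "diag_block_mat (A#As) = four_block_mat A (0\<^sub>m M (length As * M)) (0\<^sub>m (length As * M) M) B"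
    using A IH(1) unfolding B_def by (simp add: Let_def)
  have car: "diag_block_mat (A#As) \<in> carrier_mat (length (A#As) * M) (length (A#As) * M)"
    unfolding eq B_def using A IH(1) by simp
  show ?case
  proof (intro conjI allI impI car)
    fix n n' m m' assume n: "n < length (A#As)" and n': "n' < length (A#As)" and m: "m < M" and m': "m' < M"
    have bd1: "n*M+m < M + length As * M" using idx_lt[OF n m] by simp
    have bd2: "n'*M+m' < M + length As * M" using idx_lt[OF n' m'] by simp
    have ent: "diag_block_mat (A#As) $$ (n*M+m, n'*M+m') =
      (if n*M+m < M then if n'*M+m' < M then A $$ (n*M+m, n'*M+m') else 0
       else if n'*M+m' < M then 0 else B $$ (n*M+m - M, n'*M+m' - M))"
      unfolding eq using A IH(1) bd1 bd2 unfolding B_def by auto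
    show "diag_block_mat (A#As) $$ (n*M+m, n'*M+m') = (if n = n' then ((A#As)!n) $$ (m,m') else 0)"
    proof (cases n)
      case 0
      show ?thesis
      proof (cases n')
        case 0 thus ?thesis using \<open>n = 0\<close> ent m m' by simp
      next
        case (Suc k') thus ?thesis using \<open>n = 0\<close> ent m m' by simp
      qed
    next
      case (Suc k)
      have k: "k < length As" using n Suc by simp
      have sh: "n*M+m - M = k*M+m" "\<not> n*M+m < M" using Suc by auto
      show ?thesis
      proof (cases n')
        case 0 thus ?thesis using Suc ent m m' by simp
      next
        case (Suc k')
        have k': "k' < length As" using n' Suc by simp
        have sh': "n'*M+m' - M = k'*M+m'" "\<not> n'*M+m' < M" using Suc by auto
        show ?thesis using ent sh sh' IH(2)[OF k k' m m'] \<open>n = Suc k\<close> Suc unfolding B_def by simp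
      qed
    qed
  qed
qed

lemma kron_entry:
  assumes "A \<in> carrier_mat a a'" "B \<in> carrier_mat b b'" "i < a" "j < a'" "k < b" "l < b'"
  shows "kron A B $$ (i*b+k, j*b'+l) = A$$(i,j) * B$$(k,l)"
proof -
  have "i*b+k < a*b" by (rule idx_lt) (use assms in auto)
  moreover have "j*b'+l < a'*b'" by (rule idx_lt) (use assms in auto)
  ultimately show ?thesis using assms unfolding kron_def by simp
qed

lemma kron_carrier: "A \<in> carrier_mat a a' \<Longrightarrow> B \<in> carrier_mat b b' \<Longrightarrow> kron A B \<in> carrier_mat (a*b) (a'*b')"
  unfolding kron_def by auto

lemma seq_ratio:
  fixes a b R \<tau>1 \<tau>2 :: real and \<alpha> \<beta> :: "nat \<Rightarrow> real"
  assumes a: "a > 0" and b: "b > 0" and tt: "\<tau>2 < \<tau>1"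
    and alpha: "\<And>i. \<alpha> i = a / (real i + 1) powr \<tau>1" and beta: "\<And>i. \<beta> i = b / (real i + 1) powr \<tau>2"
  shows "\<exists>i1. \<forall>i\<ge>i1. \<beta> i \<ge> R * \<alpha> i"
proof -
  define d where "d = \<tau>1 - \<tau>2"
  have d: "d > 0" unfolding d_def using tt by simp
  define X where "X = \<bar>R\<bar> * a / b + 1"
  have X0: "\<bar>R\<bar> * a / b \<ge> 0" using a b by simp
  have X: "X > 0" unfolding X_def using X0 by simp
  define i1 where "i1 = nat \<lceil>X powr (1/d)\<rceil>"
  show ?thesis
  proof (intro exI[of _ i1] allI impI)
    fix i assume i: "i \<ge> i1"
    define t where "t = real i + 1"
    have t0: "t > 0" unfolding t_def by simp
    have "X powr (1/d) \<le> real i1" unfolding i1_def by linarith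
    also have "\<dots> \<le> t" unfolding t_def using i by simp
    finally have t: "X powr (1/d) \<le> t" .
    have "(X powr (1/d)) powr d \<le> t powr d" by (rule powr_mono2) (use d t in auto)
    moreover have "(X powr (1/d)) powr d = X" using d X by (simp add: powr_powr)
    ultimately have td: "t powr d \<ge> X" by simp
    have "R * a / b \<le> \<bar>R\<bar> * a / b" using a b by (intro divide_right_mono mult_right_mono) auto
    hence td2: "t powr d \<ge> R * a / b" using td unfolding X_def by linarith
    have sp: "t powr \<tau>1 = t powr \<tau>2 * t powr d" unfolding d_def using t0 by (simp add: powr_add[symmetric])
    have p1: "t powr \<tau>1 > 0" "t powr \<tau>2 > 0" using t0 by auto
    have "R * \<alpha> i = (R * a) / t powr \<tau>1" unfolding alpha t_def by simp
    also have "\<dots> \<le> (b * t powr d) / t powr \<tau>1"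
    proof (rule divide_right_mono)
      have "R * a = b * (R * a / b)" using b by simp
      also have "\<dots> \<le> b * t powr d" using td2 b by (intro mult_left_mono) auto
      finally show "R * a \<le> b * t powr d" .
    qed (use p1 in simp)
    also have "\<dots> = \<beta> i" unfolding beta t_def[symmetric] sp using p1 by (simp add: field_simps)
    finally show "\<beta> i \<ge> R * \<alpha> i" .
  qed
qed

lemma gram_entries_gen:
  fixes H :: "nat \<Rightarrow> real mat"
  assumes "\<And>n. n \<in> set ns \<Longrightarrow> H n \<in> carrier_mat (Mr n) M"
  shows "foldr (\<lambda>n S. transpose_mat (H n) * H n + S) ns (0\<^sub>m M M) \<in> carrier_mat M M \<and>
    (\<forall>i<M. \<forall>j<M. foldr (\<lambda>n S. transpose_mat (H n) * H n + S) ns (0\<^sub>m M M) $$ (i,j)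
       = sum_list (map (\<lambda>n. (transpose_mat (H n) * H n) $$ (i,j)) ns))"
  using assms
proof (induction ns)
  case Nil thus ?case by simp
next
  case (Cons n ns)
  have Hn: "H n \<in> carrier_mat (Mr n) M" using Cons.prems by simp
  from Cons.IH Cons.prems have IH: "foldr (\<lambda>n S. transpose_mat (H n) * H n + S) ns (0\<^sub>m M M) \<in> carrier_mat M M"
    "\<forall>i<M. \<forall>j<M. foldr (\<lambda>n S. transpose_mat (H n) * H n + S) ns (0\<^sub>m M M) $$ (i,j)
       = sum_list (map (\<lambda>n. (transpose_mat (H n) * H n) $$ (i,j)) ns)" by auto
  show ?case using IH Hn by auto
qed

lemma gram_entries:
  fixes H :: "nat \<Rightarrow> real mat"
  assumes "\<And>n. n < N \<Longrightarrow> H n \<in> carrier_mat (Mr n) M"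
  shows "gram_sum N M H \<in> carrier_mat M M"
    "\<And>i j. i < M \<Longrightarrow> j < M \<Longrightarrow> gram_sum N M H $$ (i,j) = (\<Sum>n<N. (transpose_mat (H n) * H n) $$ (i,j))"
proof -
  have g: "gram_sum N M H \<in> carrier_mat M M \<and>
    (\<forall>i<M. \<forall>j<M. gram_sum N M H $$ (i,j) = sum_list (map (\<lambda>n. (transpose_mat (H n) * H n) $$ (i,j)) [0..<N]))"
    unfolding gram_sum_def by (rule gram_entries_gen) (use assms in auto)
  thus "gram_sum N M H \<in> carrier_mat M M" by simp
  fix i j assume "i < M" "j < M"
  thus "gram_sum N M H $$ (i,j) = (\<Sum>n<N. (transpose_mat (H n) * H n) $$ (i,j))"
    using g by (simp add: sum_set_upt_conv_sum_list_nat[symmetric] atLeast0LessThan)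
qed

lemma qf_sum:
  assumes "\<And>i j. i < M \<Longrightarrow> j < M \<Longrightarrow> A i j = (\<Sum>n<N. B n i j)"
  shows "qf M A x = (\<Sum>n<N. qf M (B n) x)"
proof -
  have "qf M A x = (\<Sum>i<M. \<Sum>j<M. \<Sum>n<N. x i * B n i j * x j)"
    unfolding qf_def by (intro sum.cong refl) (simp add: assms sum_distrib_left sum_distrib_right)
  also have "\<dots> = (\<Sum>i<M. \<Sum>n<N. \<Sum>j<M. x i * B n i j * x j)"
    by (intro sum.cong refl) (rule sum.swap)
  also have "\<dots> = (\<Sum>n<N. \<Sum>i<M. \<Sum>j<M. x i * B n i j * x j)" by (rule sum.swap)
  finally show ?thesis unfolding qf_def .
qed

lemma quad_split:
  fixes N M :: nat
  assumes M: "M > 0" and A: "A \<in> carrier_mat (N*M) (N*M)" and y: "y \<in> carrier_vec (N*M)"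
  shows "y \<bullet> (A *\<^sub>v y) = (\<Sum>n<N. \<Sum>m<M. \<Sum>n'<N. \<Sum>m'<M.
      y$(n*M+m) * A$$(n*M+m, n'*M+m') * y$(n'*M+m'))"
proof -
  have "y \<bullet> (A *\<^sub>v y) = (\<Sum>a<N*M. \<Sum>b<N*M. y$a * A$$(a,b) * y$b)" by (rule quad_vec[OF A y])
  also have "\<dots> = (\<Sum>n<N. \<Sum>m<M. \<Sum>b<N*M. y$(n*M+m) * A$$(n*M+m,b) * y$b)"
    by (rule sum_split_nm[OF M])
  also have "\<dots> = (\<Sum>n<N. \<Sum>m<M. \<Sum>n'<N. \<Sum>m'<M. y$(n*M+m) * A$$(n*M+m, n'*M+m') * y$(n'*M+m'))"
  proof -
    have e: "\<And>n m. (\<Sum>b<N*M. y$(n*M+m) * A$$(n*M+m,b) * y$b) = (\<Sum>n'<N. \<Sum>m'<M. y$(n*M+m) * A$$(n*M+m, n'*M+m') * y$(n'*M+m'))"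
      by (rule sum_split_nm[OF M])
    show ?thesis by (simp only: e)
  qed
  finally show ?thesis .
qed

lemma fsL:
  fixes Y :: "nat \<Rightarrow> nat \<Rightarrow> real"
  shows "(\<Sum>n<N. \<Sum>m<M. \<Sum>n'<N. \<Sum>m'<M. Y n m * (Lf n n' * (if m = m' then 1 else 0)) * Y n' m')
    = (\<Sum>m<M. qf N Lf (\<lambda>n. Y n m))"
proof -
  have "(\<Sum>n<N. \<Sum>m<M. \<Sum>n'<N. \<Sum>m'<M. Y n m * (Lf n n' * (if m = m' then 1 else 0)) * Y n' m')
     = (\<Sum>n<N. \<Sum>m<M. \<Sum>n'<N. Y n m * Lf n n' * Y n' m)"
  proof (intro sum.cong refl)
    fix n m n' assume "m \<in> {..<M}"
    have "(\<Sum>m'<M. Y n m * (Lf n n' * (if m = m' then 1 else 0)) * Y n' m') =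
        (\<Sum>m'<M. if m = m' then Y n m * Lf n n' * Y n' m' else 0)" by (rule sum.cong) auto
    thus "(\<Sum>m'<M. Y n m * (Lf n n' * (if m = m' then 1 else 0)) * Y n' m') = Y n m * Lf n n' * Y n' m"
      using \<open>m \<in> {..<M}\<close> by (simp add: sum.delta)
  qed
  also have "\<dots> = (\<Sum>m<M. \<Sum>n<N. \<Sum>n'<N. Y n m * Lf n n' * Y n' m)" by (rule sum.swap)
  finally show ?thesis unfolding qf_def .
qed

lemma fsD:
  fixes Y :: "nat \<Rightarrow> nat \<Rightarrow> real"
  shows "(\<Sum>n<N. \<Sum>m<M. \<Sum>n'<N. \<Sum>m'<M. Y n m * (if n = n' then KP n m m' else 0) * Y n' m')
    = (\<Sum>n<N. qf M (KP n) (Y n))"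
proof -
  have "(\<Sum>n<N. \<Sum>m<M. \<Sum>n'<N. \<Sum>m'<M. Y n m * (if n = n' then KP n m m' else 0) * Y n' m')
     = (\<Sum>n<N. \<Sum>n'<N. \<Sum>m<M. \<Sum>m'<M. Y n m * (if n = n' then KP n m m' else 0) * Y n' m')"
    by (rule sum.cong[OF refl], rule sum.swap)
  also have "\<dots> = (\<Sum>n<N. \<Sum>n'<N. if n = n' then (\<Sum>m<M. \<Sum>m'<M. Y n m * KP n m m' * Y n' m') else 0)"
    by (rule sum.cong[OF refl], rule sum.cong[OF refl]) auto
  also have "\<dots> = (\<Sum>n<N. qf M (KP n) (Y n))"
    unfolding qf_def by (rule sum.cong[OF refl]) (simp add: sum.delta)
  finally show ?thesis .
qed

theorem lemma3:
  fixes N M :: nat and L K :: "real mat" and H :: "nat \<Rightarrow> real mat" and Mr :: "nat \<Rightarrow> nat"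
    and a b \<tau>1 \<tau>2 \<gamma>0 \<epsilon>1 :: real and \<alpha> \<beta> :: "nat \<Rightarrow> real"
  assumes N2: "N \<ge> 2"
    and lap: "graph_laplacian N L"
    and conn: "lambda2 L > 0"
    and Hdim: "\<And>n. n < N \<Longrightarrow> H n \<in> carrier_mat (Mr n) M"
    and Ginv: "invertible_mat (gram_sum N M H)"
    and Kpd: "pos_def_mat M K"
    and Kcomm: "K * (gram_sum N M H)
              = (gram_sum N M H) * K"
    and ab: "a > 0" "b > 0"
    and taus: "0 < \<tau>2" "\<tau>2 \<le> \<tau>1" "\<tau>1 \<le> 1"
    and gam: "0 \<le> \<gamma>0" "\<gamma>0 < 1/2" "\<epsilon>1 > 0"
    and tau1: "\<tau>1 > max (1/2 + \<gamma>0) (\<tau>2 + \<gamma>0 + 1 / (2 + \<epsilon>1))"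
    and alpha: "\<And>i. \<alpha> i = a / (real i + 1) powr \<tau>1"
    and beta: "\<And>i. \<beta> i = b / (real i + 1) powr \<tau>2"
  shows "\<exists>i1 c4. c4 > 0 \<and> (\<forall>i\<ge>i1. \<forall>y \<in> carrier_vec (N * M).
           y \<bullet> ((\<beta> i \<cdot>\<^sub>m kron L (1\<^sub>m M)
                  + \<alpha> i \<cdot>\<^sub>m (kron (1\<^sub>m N) K
                       * diag_block_mat (map (\<lambda>n. transpose_mat (H n) * H n) [0..<N]))) *\<^sub>v y)
           \<ge> c4 * \<alpha> i * (y \<bullet> y))"
proof (cases "M = 0")
  case True
  have Kc0: "K \<in> carrier_mat M M" using Kpd unfolding pos_def_mat_def by auto
  have z: "y \<bullet> w = 0" if "dim_vec w = 0" for y w :: "real vec"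
    using that unfolding scalar_prod_def by simp
  have d: "dim_vec ((\<beta> i \<cdot>\<^sub>m kron L (1\<^sub>m M)
                  + \<alpha> i \<cdot>\<^sub>m (kron (1\<^sub>m N) K
                       * diag_block_mat (map (\<lambda>n. transpose_mat (H n) * H n) [0..<N]))) *\<^sub>v y) = 0" for i y
    using Kc0 True by (simp add: kron_def)
  have yy: "y \<bullet> y = 0" if "y \<in> carrier_vec (N*M)" for y :: "real vec"
    using that True by (intro z) simp
  show ?thesis by (intro exI[of _ 0] exI[of _ 1]) (simp add: z[OF d] yy)
next
  case False
  hence M0: "M > 0" by simp
  have N0: "N > 0" using N2 by simp
  have e1: "1 / (2 + \<epsilon>1) > 0" using gam by simp
  have "\<tau>2 + \<gamma>0 + 1 / (2 + \<epsilon>1) < \<tau>1" using tau1 by simp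
  hence tt: "\<tau>2 < \<tau>1" using e1 gam by linarith
  have Lc: "L \<in> carrier_mat N N" and Lsym: "transpose_mat L = L"
    and Loff: "\<And>i j. i < N \<Longrightarrow> j < N \<Longrightarrow> i \<noteq> j \<Longrightarrow> L $$ (i,j) \<le> 0"
    and Lrs: "\<And>i. i < N \<Longrightarrow> (\<Sum>j<N. L $$ (i,j)) = 0"
    using lap unfolding graph_laplacian_def symmetric_mat_def by auto
  define Lf where "Lf i j = L $$ (i,j)" for i j
  have symL: "symm N Lf" unfolding symm_def Lf_def
  proof (intro allI impI)
    fix i j assume "i < N" "j < N"
    hence "transpose_mat L $$ (i,j) = L $$ (j,i)" using Lc by simp
    thus "L $$ (i,j) = L $$ (j,i)" using Lsym by simp
  qed
  have offL: "\<And>i j. i < N \<Longrightarrow> j < N \<Longrightarrow> i \<noteq> j \<Longrightarrow> Lf i j \<le> 0" using Loff unfolding Lf_def .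
  have rsL: "\<And>i. i < N \<Longrightarrow> (\<Sum>j<N. Lf i j) = 0" using Lrs unfolding Lf_def .
  have kerL: False if "\<forall>i<N. mv N Lf w i = 0" "(\<Sum>i<N. w i) = 0" "\<exists>i<N. w i \<noteq> 0" for w
  proof -
    have "lambda2 L \<le> 0"
      by (rule lambda2_kernel[OF Lc N2 Lrs _ that(2,3)]) (use that(1) in \<open>auto simp: mv_def Lf_def\<close>)
    thus False using conn by simp
  qed
  obtain cL where cLa: "cL > 0 \<and> (\<forall>w. (\<Sum>i<N. w i) = 0 \<longrightarrow> qf N Lf w \<ge> cL * nsq N w)"
  proof -
    have "\<exists>c>0. \<forall>w. (\<Sum>i<N. w i) = 0 \<longrightarrow> qf N Lf w \<ge> c * nsq N w"
      by (rule lap_coercive[where N=N and Lf=Lf]) (fact symL, fact offL, fact rsL, fact kerL)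
    thus ?thesis by (elim exE) (rule that)
  qed
  have cL: "cL > 0" "\<And>w. (\<Sum>i<N. w i) = 0 \<Longrightarrow> qf N Lf w \<ge> cL * nsq N w"
    using cLa by simp_all
  have Kc: "K \<in> carrier_mat M M" and Ksym: "transpose_mat K = K"
    and Kpos: "\<And>x. x \<in> carrier_vec M \<Longrightarrow> x \<noteq> 0\<^sub>v M \<Longrightarrow> x \<bullet> (K *\<^sub>v x) > 0"
    using Kpd unfolding pos_def_mat_def symmetric_mat_def by auto
  define Kf where "Kf i j = K $$ (i,j)" for i j
  have symK: "symm M Kf" unfolding symm_def Kf_def
  proof (intro allI impI)
    fix i j assume "i < M" "j < M"
    hence "transpose_mat K $$ (i,j) = K $$ (j,i)" using Kc by simp
    thus "K $$ (i,j) = K $$ (j,i)" using Ksym by simp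
  qed
  have vecnz: "vec n x \<noteq> 0\<^sub>v n" if "\<exists>i<n. x i \<noteq> 0" for n and x :: "nat \<Rightarrow> real"
  proof
    assume e: "vec n x = 0\<^sub>v n"
    from that obtain i where "i < n" "x i \<noteq> 0" by blast
    moreover have "vec n x $ i = 0\<^sub>v n $ i" using e by simp
    ultimately show False by simp
  qed
  have Kpd': "qf M Kf x > 0" if "\<exists>i<M. x i \<noteq> 0" for x
    using Kpos[OF vec_carrier vecnz[OF that]] quad_vec_fun[OF Kc, of x] unfolding Kf_def
    by (simp add: Kf_def[abs_def])
  obtain k where ka: "k > 0 \<and> (\<forall>x. qf M Kf x \<ge> k * nsq M x)" 
  proof -
    have "\<exists>c>0. \<forall>x. qf M Kf x \<ge> c * nsq M x" by (rule pd_bound) (fact symK, fact Kpd')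
    thus ?thesis by (elim exE) (rule that)
  qed
  have k: "k > 0" "\<And>x. qf M Kf x \<ge> k * nsq M x" using ka by simp_all
  define P where "P n = transpose_mat (H n) * H n" for n
  have Pc: "P n \<in> carrier_mat M M" if "n < N" for n using Hdim[OF that] unfolding P_def by auto
  have Pent: "P n $$ (i,j) = (\<Sum>r<Mr n. H n $$ (r,i) * H n $$ (r,j))" if "n < N" "i < M" "j < M" for n i j
  proof -
    have "P n $$ (i,j) = (\<Sum>r<Mr n. transpose_mat (H n) $$ (i,r) * H n $$ (r,j))"
      unfolding P_def by (rule mult_entry) (use Hdim[OF that(1)] that in auto)
    also have "\<dots> = (\<Sum>r<Mr n. H n $$ (r,i) * H n $$ (r,j))"
      by (rule sum.cong[OF refl]) (use Hdim[OF that(1)] that in auto)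
    finally show ?thesis .
  qed
  define Gm where "Gm = gram_sum N M H"
  have Gc: "Gm \<in> carrier_mat M M" unfolding Gm_def by (rule gram_entries(1)[OF Hdim])
  have Gent: "Gm $$ (i,j) = (\<Sum>n<N. P n $$ (i,j))" if "i < M" "j < M" for i j
    unfolding Gm_def P_def by (rule gram_entries(2)[OF Hdim that])
  define Gf where "Gf i j = Gm $$ (i,j)" for i j
  define Pf where "Pf n i j = P n $$ (i,j)" for n i j
  have symG: "symm M Gf" unfolding symm_def Gf_def
    by (auto simp: Gent Pent mult.commute intro!: sum.cong)
  have qfP: "qf M (Pf n) x \<ge> 0" if n: "n < N" for n x
  proof -
    have "qf M (Pf n) x = (\<Sum>i<M. \<Sum>j<M. \<Sum>r<Mr n. (H n $$ (r,i) * x i) * (H n $$ (r,j) * x j))"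
      unfolding qf_def Pf_def
      by (rule sum.cong[OF refl], rule sum.cong[OF refl]) (simp add: Pent[OF n] sum_distrib_left sum_distrib_right algebra_simps)
    also have "\<dots> = (\<Sum>i<M. \<Sum>r<Mr n. \<Sum>j<M. (H n $$ (r,i) * x i) * (H n $$ (r,j) * x j))"
      by (rule sum.cong[OF refl], rule sum.swap)
    also have "\<dots> = (\<Sum>r<Mr n. \<Sum>i<M. \<Sum>j<M. (H n $$ (r,i) * x i) * (H n $$ (r,j) * x j))"
      by (rule sum.swap)
    also have "\<dots> = (\<Sum>r<Mr n. (\<Sum>i<M. H n $$ (r,i) * x i)^2)"
      by (simp add: power2_eq_square sum_product)
    also have "\<dots> \<ge> 0" by (simp add: sum_nonneg)
    finally show ?thesis .
  qed
  have qfG: "qf M Gf x = (\<Sum>n<N. qf M (Pf n) x)" for x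
    by (rule qf_sum) (simp add: Gf_def Pf_def Gent)
  have psdG: "qf M Gf z \<ge> 0" for z unfolding qfG by (rule sum_nonneg) (simp add: qfP)
  have "\<exists>Bi. inverts_mat Gm Bi \<and> inverts_mat Bi Gm" using Ginv unfolding invertible_mat_def Gm_def by (rule conjunct2)
  then obtain Bi where Bia: "inverts_mat Gm Bi \<and> inverts_mat Bi Gm" by (elim exE) (rule that)
  have Bi: "Gm * Bi = 1\<^sub>m M" "Bi * Gm = 1\<^sub>m (dim_row Bi)"
    using Bia Gc unfolding inverts_mat_def by auto
  have Bic: "Bi \<in> carrier_mat M M"
  proof -
    have "dim_col Bi = M" using arg_cong[OF Bi(1), of dim_col] by simp
    moreover have "dim_row Bi = M" using arg_cong[OF Bi(2), of dim_col] Gc by simp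
    ultimately show ?thesis by auto
  qed
  have Gpd': "qf M Gf x > 0" if "\<exists>i<M. x i \<noteq> 0" for x
  proof (rule ccontr)
    assume "\<not> qf M Gf x > 0"
    hence z: "qf M Gf x = 0" using psdG[of x] by simp
    have "Gm *\<^sub>v vec M x = 0\<^sub>v M"
    proof (rule eq_vecI)
      fix i assume "i < dim_vec (0\<^sub>v M :: real vec)"
      hence i: "i < M" by simp
      have "(Gm *\<^sub>v vec M x) $ i = mv M Gf x i" using mv_vec[OF Gc i] unfolding Gf_def by (simp add: Gf_def[abs_def])
      also have "\<dots> = 0" by (rule psd_kernel[OF symG psdG z i])
      finally show "(Gm *\<^sub>v vec M x) $ i = 0\<^sub>v M $ i" using i by simp
    qed (use Gc in simp)
    moreover have "Bi *\<^sub>v 0\<^sub>v M = 0\<^sub>v M"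
      by (rule eq_vecI) (use Bic in \<open>auto simp: scalar_prod_def\<close>)
    ultimately have "Bi *\<^sub>v (Gm *\<^sub>v vec M x) = 0\<^sub>v M" by simp
    moreover have "Bi *\<^sub>v (Gm *\<^sub>v vec M x) = vec M x"
      using Bi(2) Bic Gc by (simp flip: assoc_mult_mat_vec[OF Bic Gc vec_carrier])
    ultimately show False using vecnz[OF that] by simp
  qed
  obtain g where ga: "g > 0 \<and> (\<forall>x. qf M Gf x \<ge> g * nsq M x)" 
  proof -
    have "\<exists>c>0. \<forall>x. qf M Gf x \<ge> c * nsq M x" by (rule pd_bound) (fact symG, fact Gpd')
    thus ?thesis by (elim exE) (rule that)
  qed
  have g: "g > 0" "\<And>x. qf M Gf x \<ge> g * nsq M x" using ga by simp_all
  have comm: "mm M Kf Gf i j = mm M Gf Kf i j" if "i < M" "j < M" for i j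
  proof -
    have "mm M Kf Gf i j = (K * Gm) $$ (i,j)" unfolding mm_def Kf_def Gf_def
      by (rule mult_entry[symmetric]) (use Kc Gc that in auto)
    also have "\<dots> = (Gm * K) $$ (i,j)" using Kcomm unfolding Gm_def by simp
    also have "\<dots> = mm M Gf Kf i j" unfolding mm_def Kf_def Gf_def
      by (rule mult_entry) (use Kc Gc that in auto)
    finally show ?thesis .
  qed
  obtain \<kappa> where \<kappa>a: "\<kappa> > 0 \<and> (\<forall>x. qf M (mm M Kf Gf) x \<ge> \<kappa> * nsq M x)"
  proof -
    have "\<exists>\<delta>>0. \<forall>x. qf M (mm M Kf Gf) x \<ge> \<delta> * nsq M x"
      by (rule comm_pd[where k=k and g=g]) (fact symK, fact symG, fact comm, fact k(1), fact k(2), fact g(1), fact g(2))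
    thus ?thesis by (elim exE) (rule that)
  qed
  have \<kappa>: "\<kappa> > 0" "\<And>x. qf M (mm M Kf Gf) x \<ge> \<kappa> * nsq M x" using \<kappa>a by simp_all
  define KP where "KP n = mm M Kf (Pf n)" for n
  have \<kappa>2: "(\<Sum>n<N. qf M (KP n) v) \<ge> \<kappa> * nsq M v" for v
  proof -
    have "qf M (mm M Kf Gf) v = (\<Sum>n<N. qf M (KP n) v)"
    proof (rule qf_sum)
      fix i j assume "i < M" "j < M"
      have "mm M Kf Gf i j = (\<Sum>l<M. \<Sum>n<N. Kf i l * Pf n l j)"
        unfolding mm_def by (rule sum.cong[OF refl]) (simp add: Gf_def Gent Pf_def sum_distrib_left \<open>j < M\<close>)
      also have "\<dots> = (\<Sum>n<N. KP n i j)" unfolding KP_def mm_def by (rule sum.swap)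
      finally show "mm M Kf Gf i j = (\<Sum>n<N. KP n i j)" .
    qed
    thus ?thesis using \<kappa>(2)[of v] by simp
  qed
  define B where "B = (\<Sum>n<N. \<Sum>i<M. \<Sum>j<M. \<bar>KP n i j\<bar>)"
  have Bb: "\<bar>KP n i j\<bar> \<le> B" if "n < N" "i < M" "j < M" for n i j
  proof -
    have "\<bar>KP n i j\<bar> \<le> (\<Sum>j'<M. \<bar>KP n i j'\<bar>)"
      by (rule member_le_sum[of j "{..<M}" "\<lambda>j'. \<bar>KP n i j'\<bar>"]) (use that in auto)
    also have "\<dots> \<le> (\<Sum>i'<M. \<Sum>j'<M. \<bar>KP n i' j'\<bar>)"
      by (rule member_le_sum[of i "{..<M}" "\<lambda>i'. \<Sum>j'<M. \<bar>KP n i' j'\<bar>"]) (use that in \<open>auto intro: sum_nonneg\<close>)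
    also have "\<dots> \<le> B" unfolding B_def
      by (rule member_le_sum[of n "{..<N}" "\<lambda>n. \<Sum>i'<M. \<Sum>j'<M. \<bar>KP n i' j'\<bar>"]) (use that in \<open>auto intro: sum_nonneg\<close>)
    finally show ?thesis .
  qed
  obtain R c4 where Ra: "c4 > 0 \<and> (\<forall>\<alpha> \<beta> Y. \<alpha> > 0 \<longrightarrow> \<beta> \<ge> R * \<alpha> \<longrightarrow>
      \<beta> * (\<Sum>m<M. qf N Lf (\<lambda>n. Y n m)) + \<alpha> * (\<Sum>n<N. qf M (KP n) (Y n))
        \<ge> c4 * \<alpha> * (\<Sum>n<N. nsq M (Y n)))"
  proof -
    have "\<exists>R c4. c4 > 0 \<and> (\<forall>\<alpha> \<beta> Y. \<alpha> > 0 \<longrightarrow> \<beta> \<ge> R * \<alpha> \<longrightarrow>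
      \<beta> * (\<Sum>m<M. qf N Lf (\<lambda>n. Y n m)) + \<alpha> * (\<Sum>n<N. qf M (KP n) (Y n))
        \<ge> c4 * \<alpha> * (\<Sum>n<N. nsq M (Y n)))"
      by (rule main_ineq[where cL=cL and B=B and \<kappa>=\<kappa>]) (fact N0, fact symL, fact rsL, fact cL(1), fact cL(2), fact Bb, fact \<kappa>(1), fact \<kappa>2)
    thus ?thesis by (elim exE) (rule that)
  qed
  have c4: "c4 > 0" using Ra by (rule conjunct1)
  have mainA: "\<forall>\<alpha> \<beta> Y. \<alpha> > 0 \<longrightarrow> \<beta> \<ge> R * \<alpha> \<longrightarrow>
      \<beta> * (\<Sum>m<M. qf N Lf (\<lambda>n. Y n m)) + \<alpha> * (\<Sum>n<N. qf M (KP n) (Y n))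
        \<ge> c4 * \<alpha> * (\<Sum>n<N. nsq M (Y n))" using Ra by (rule conjunct2)
  note main = mainA[rule_format]
  obtain i1 where i1a: "\<forall>i\<ge>i1. \<beta> i \<ge> R * \<alpha> i"
  proof -
    have "\<exists>i1. \<forall>i\<ge>i1. \<beta> i \<ge> R * \<alpha> i"
      by (rule seq_ratio) (fact ab(1), fact ab(2), fact tt, fact alpha, fact beta)
    thus ?thesis by (elim exE) (rule that)
  qed
  note i1 = i1a[rule_format]
  define D where "D = diag_block_mat (map P [0..<N])"
  have Dfacts: "D \<in> carrier_mat (N*M) (N*M) \<and> (\<forall>n n' m m'. n < N \<longrightarrow> n' < N \<longrightarrow> m < M \<longrightarrow> m' < M \<longrightarrow>
      D $$ (n*M+m, n'*M+m') = (if n = n' then P n $$ (m,m') else 0))"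
  proof -
    have prem: "\<And>A. A \<in> set (map P [0..<N]) \<Longrightarrow> A \<in> carrier_mat M M" using Pc by auto
    have DE: "diag_block_mat (map P [0..<N]) \<in> carrier_mat (length (map P [0..<N]) * M) (length (map P [0..<N]) * M) \<and>
      (\<forall>n n' m m'. n < length (map P [0..<N]) \<longrightarrow> n' < length (map P [0..<N]) \<longrightarrow> m < M \<longrightarrow> m' < M \<longrightarrow>
        diag_block_mat (map P [0..<N]) $$ (n*M+m, n'*M+m') = (if n = n' then ((map P [0..<N])!n) $$ (m,m') else 0))"
      by (rule diag_block_entry) (fact prem)
    show ?thesis using DE unfolding D_def by simp
  qed
  have Dc: "D \<in> carrier_mat (N*M) (N*M)" using Dfacts by blast
  have Dent: "D $$ (n*M+m, n'*M+m') = (if n = n' then P n $$ (m,m') else 0)"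
    if "n < N" "n' < N" "m < M" "m' < M" for n n' m m' using Dfacts that by blast
  have kLc: "kron L (1\<^sub>m M) \<in> carrier_mat (N*M) (N*M)" by (rule kron_carrier[OF Lc]) simp
  have kKc: "kron (1\<^sub>m N) K \<in> carrier_mat (N*M) (N*M)" by (rule kron_carrier[OF _ Kc]) simp
  have KDent: "(kron (1\<^sub>m N) K * D) $$ (n*M+m, n'*M+m') = (if n = n' then KP n m m' else 0)"
    if nm: "n < N" "n' < N" "m < M" "m' < M" for n n' m m'
  proof -
    have "(kron (1\<^sub>m N) K * D) $$ (n*M+m, n'*M+m') =
        (\<Sum>q<N*M. kron (1\<^sub>m N) K $$ (n*M+m, q) * D $$ (q, n'*M+m'))"
      by (rule mult_entry[OF kKc Dc]) (use nm idx_lt in auto)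
    also have "\<dots> = (\<Sum>n''<N. \<Sum>m''<M. kron (1\<^sub>m N) K $$ (n*M+m, n''*M+m'') * D $$ (n''*M+m'', n'*M+m'))"
      by (rule sum_split_nm[OF M0])
    also have "\<dots> = (\<Sum>n''<N. \<Sum>m''<M. (if n = n'' then 1 else 0) * K $$ (m,m'') * (if n'' = n' then P n'' $$ (m'',m') else 0))"
      by (rule sum.cong[OF refl], rule sum.cong[OF refl])
         (use nm in \<open>auto simp: kron_entry[OF one_carrier_mat Kc] Dent\<close>)
    also have "\<dots> = (\<Sum>m''<M. K $$ (m,m'') * (if n = n' then P n $$ (m'',m') else 0))"
    proof -
      have "(\<Sum>n''<N. \<Sum>m''<M. (if n = n'' then 1 else 0) * K $$ (m,m'') * (if n'' = n' then P n'' $$ (m'',m') else 0))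
          = (\<Sum>n''<N. if n = n'' then (\<Sum>m''<M. K $$ (m,m'') * (if n'' = n' then P n'' $$ (m'',m') else 0)) else 0)"
        by (rule sum.cong[OF refl]) auto
      also have "\<dots> = (\<Sum>m''<M. K $$ (m,m'') * (if n = n' then P n $$ (m'',m') else 0))"
        using nm by (simp add: sum.delta)
      finally show ?thesis .
    qed
    also have "\<dots> = (if n = n' then KP n m m' else 0)"
      unfolding KP_def mm_def Kf_def Pf_def by auto
    finally show ?thesis .
  qed
  show ?thesis
  proof (intro exI[of _ i1] exI[of _ c4] conjI c4 allI impI ballI)
    fix i :: nat and y :: "real vec" assume i: "i \<ge> i1" and y: "y \<in> carrier_vec (N * M)"
    define Big where "Big = \<beta> i \<cdot>\<^sub>m kron L (1\<^sub>m M) + \<alpha> i \<cdot>\<^sub>m (kron (1\<^sub>m N) K * D)"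
    have Bigc: "Big \<in> carrier_mat (N*M) (N*M)" unfolding Big_def using kLc kKc Dc by auto
    define Y where "Y n m = y $ (n*M+m)" for n m
    have Bigent: "Big $$ (n*M+m, n'*M+m') = \<beta> i * (Lf n n' * (if m = m' then 1 else 0)) + \<alpha> i * (if n = n' then KP n m m' else 0)"
      if nm: "n < N" "n' < N" "m < M" "m' < M" for n n' m m'
    proof -
      have lt: "n*M+m < N*M" "n'*M+m' < N*M" using nm idx_lt by auto
      have "Big $$ (n*M+m, n'*M+m') = \<beta> i * kron L (1\<^sub>m M) $$ (n*M+m, n'*M+m') + \<alpha> i * (kron (1\<^sub>m N) K * D) $$ (n*M+m, n'*M+m')"
        unfolding Big_def using lt kLc kKc Dc by (simp del: index_mult_mat(1))
      also have "\<dots> = \<beta> i * (Lf n n' * (if m = m' then 1 else 0)) + \<alpha> i * (if n = n' then KP n m m' else 0)"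
        unfolding KDent[OF nm] kron_entry[OF Lc one_carrier_mat nm(1,2,3,4)] Lf_def using nm by simp
      finally show ?thesis .
    qed
    have "y \<bullet> (Big *\<^sub>v y) = (\<Sum>n<N. \<Sum>m<M. \<Sum>n'<N. \<Sum>m'<M. Y n m * Big $$ (n*M+m, n'*M+m') * Y n' m')"
      unfolding Y_def by (rule quad_split[OF M0 Bigc y])
    also have "\<dots> = (\<Sum>n<N. \<Sum>m<M. \<Sum>n'<N. \<Sum>m'<M.
        \<beta> i * (Y n m * (Lf n n' * (if m = m' then 1 else 0)) * Y n' m') +
        \<alpha> i * (Y n m * (if n = n' then KP n m m' else 0) * Y n' m'))"
      by (rule sum.cong[OF refl], rule sum.cong[OF refl], rule sum.cong[OF refl], rule sum.cong[OF refl])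
         (simp only: lessThan_iff Bigent, simp add: algebra_simps)
    also have "\<dots> = \<beta> i * (\<Sum>n<N. \<Sum>m<M. \<Sum>n'<N. \<Sum>m'<M. Y n m * (Lf n n' * (if m = m' then 1 else 0)) * Y n' m')
        + \<alpha> i * (\<Sum>n<N. \<Sum>m<M. \<Sum>n'<N. \<Sum>m'<M. Y n m * (if n = n' then KP n m m' else 0) * Y n' m')"
      by (simp only: sum.distrib sum_distrib_left)
    also have "\<dots> = \<beta> i * (\<Sum>m<M. qf N Lf (\<lambda>n. Y n m)) + \<alpha> i * (\<Sum>n<N. qf M (KP n) (Y n))"
      unfolding fsL fsD ..
    finally have lhs: "y \<bullet> (Big *\<^sub>v y) = \<beta> i * (\<Sum>m<M. qf N Lf (\<lambda>n. Y n m)) + \<alpha> i * (\<Sum>n<N. qf M (KP n) (Y n))" .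
    have yy: "y \<bullet> y = (\<Sum>n<N. nsq M (Y n))"
    proof -
      have "y \<bullet> y = (\<Sum>a<N*M. y$a * y$a)" by (rule sp_sum[OF y y])
      also have "\<dots> = (\<Sum>n<N. \<Sum>m<M. y$(n*M+m) * y$(n*M+m))" by (rule sum_split_nm[OF M0])
      finally show ?thesis unfolding nsq_def Y_def by (simp add: power2_eq_square)
    qed
    have apos: "\<alpha> i > 0" unfolding alpha using ab by simp
    have "c4 * \<alpha> i * (y \<bullet> y) \<le> y \<bullet> (Big *\<^sub>v y)"
      unfolding lhs yy by (rule main[OF apos i1[OF i]])
    thus "c4 * \<alpha> i * (y \<bullet> y) \<le> y \<bullet> ((\<beta> i \<cdot>\<^sub>m kron L (1\<^sub>m M)
                  + \<alpha> i \<cdot>\<^sub>m (kron (1\<^sub>m N) K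
                       * diag_block_mat (map (\<lambda>n. transpose_mat (H n) * H n) [0..<N]))) *\<^sub>v y)"
      unfolding Big_def D_def P_def .
  qed
qed

end
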